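(* In the setting below, assume in addition: (i) for fixed $x$ and $z$ the functions $x'\mapsto d_{\mathrm p}(x,x')$ and $z'\mapsto d_{\mathrm d}(z,z')$ are closed (their sublevel sets are closed); (ii) if $\tilde x^{(k)}\in\operatorname{int}(\operatorname{dom}\phi_{\mathrm p})$ converges to $x\in\operatorname{dom}\phi_{\mathrm p}$ then $d_{\mathrm p}(x,\tilde x^{(k)})\to0$, and if $\tilde z^{(k)}\in\operatorname{int}(\operatorname{dom}\phi_{\mathrm d})$ converges to $z\in\operatorname{dom}\phi_{\mathrm d}$ then $d_{\mathrm d}(z,\tilde z^{(k)})\to0$; (iii) $\sigma,\tau>0$ satisfy $\sigma\tau\|A\|^2+\tau L<1$. Let $(x^{(k)},z^{(k)})$ be generated either by the Bregman primal Condat--V\~u algorithm \[x^{(k+1)}=\mathrm{prox}^{\phi_{\mathrm p}}_{\tau f}\big(x^{(k)},\tau A^Tz^{(k)}+\tau\nabla h(x^{(k)})\big),\quad z^{(k+1)}=\mathrm{prox}^{\phi_{\mathrm d}}_{\sigma g^*}\big(z^{(k)},-\sigma A(2x^{(k+1)}-x^{(k)})\big),\] or by the Bregman dual Condat--V\~u algorithm \[z^{(k+1)}=\mathrm{prox}^{\phi_{\mathrm d}}_{\sigma g^*}\big(z^{(k)},-\sigma Ax^{(k)}\big),\quad x^{(k+1)}=\mathrm{prox}^{\phi_{\mathrm p}}_{\tau f}\big(x^{(k)},\tau A^T(2z^{(k+1)}-z^{(k)})+\tau\nabla h(x^{(k)})\big),\] starting from $x^{(0)}\in\operatorname{int}(\operatorname{dom}\phi_{\mathrm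 p})\cap\operatorname{dom} h$, $z^{(0)}\in\operatorname{int}(\operatorname{dom}\phi_{\mathrm d})$. Then $x^{(k)}\to\hat x$ and $z^{(k)}\to\hat z$ for some $(\hat x,\hat z)$ satisfying the optimality conditions $-A^T\hat z\in\partial f(\hat x)+\nabla h(\hat x)$ and $A\hat x\in\partial g^*(\hat z)$.
   Context: Setting: $f:\mathbb R^n\to\mathbb R\cup\{+\infty\}$, $g:\mathbb R^m\to\mathbb R\cup\{+\infty\}$, $h$ are closed convex functions, $h$ differentiable on its open convex domain, $f+h$ and $g$ proper, $A\in\mathbb R^{m\times n}$; $g^*$ is the conjugate of $g$. A Bregman kernel $\phi$ is convex with $\operatorname{int}(\operatorname{dom}\phi)\neq\emptyset$, continuous on $\operatorname{dom}\phi$, continuously differentiable on $\operatorname{int}(\operatorname{dom}\phi)$; its distance is $d(x,y)=\phi(x)-\phi(y)-\langle\nabla\phi(y),x-y\rangle$ on $\operatorname{dom}\phi\times\operatorname{int}(\operatorname{dom}\phi)$, and $\mathrm{prox}^\phi_F(y,a)=\operatorname{argmin}_x\big(F(x)+\langle a,x\rangle+d(x,y)\big)$, assumed for every $a$ and $y\in\operatorname{int}(\operatorname{dom}\phi)$ to be a unique point of $\operatorname{int}(\operatorname{dom}\phi)$. Kernels $\phi_{\mathrm p}$ on $\mathbb R^n$, $\phi_{\mathrm d}$ on $\mathbb R^m$ have distances $d_{\mathrm p},d_{\mathrm d}$ with $d_{\mathrm p}(x,x')\ge\frac12\|x-x'\|_{\mathrm p}^2$, $d_{\mathrm d}(z,z')\ge\frac12\|z-z'\|_{\mathrm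 d}^2$ for norms $\|\cdot\|_{\mathrm p},\|\cdot\|_{\mathrm d}$. Also $\operatorname{dom}\phi_{\mathrm p}\subseteq\operatorname{dom}h$ and $h(x)-h(x')-\langle\nabla h(x'),x-x'\rangle\le L\,d_{\mathrm p}(x,x')$ for all $(x,x')\in\operatorname{dom}d_{\mathrm p}$, for some $L>0$. $\|A\|=\sup_{u\ne0,v\ne0}\langle v,Au\rangle/(\|v\|_{\mathrm d}\|u\|_{\mathrm p})$. The optimality conditions $0\in\partial f(x)+\nabla h(x)+A^Tz$, $0\in\partial g^*(z)-Ax$ have a solution $(x^\star,z^\star)\in\operatorname{dom}\phi_{\mathrm p}\times\operatorname{dom}\phi_{\mathrm d}$. *)

theory Defs
  imports "HOL-Analysis.Analysis" "HOL-Library.Extended_Real"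
begin

definition edom :: "('a \<Rightarrow> ereal) \<Rightarrow> 'a set" where
  "edom F = {x. F x < \<infinity>}"

definition eproper :: "('a \<Rightarrow> ereal) \<Rightarrow> bool" where
  "eproper F \<longleftrightarrow> (\<forall>x. F x \<noteq> -\<infinity>) \<and> edom F \<noteq> {}"

definition eepigraph :: "('a \<Rightarrow> ereal) \<Rightarrow> ('a \<times> real) set" where
  "eepigraph F = {(x, t). F x \<le> ereal t}"

definition econvex :: "('a::real_vector \<Rightarrow> ereal) \<Rightarrow> bool" where
  "econvex F \<longleftrightarrow> convex (eepigraph F)"

definition eclosed :: "('a::topological_space \<Rightarrow> ereal) \<Rightarrow> bool" where
  "eclosed F \<longleftrightarrow> closed (eepigraph F)"

definition subdiff :: "('a::real_inner \<Rightarrow> ereal) \<Rightarrow> 'a \<Rightarrow> 'a set" where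
  "subdiff F x = {u. \<bar>F x\<bar> \<noteq> \<infinity> \<and> (\<forall>y. F x + ereal (u \<bullet> (y - x)) \<le> F y)}"

definition conjugate :: "('a::real_inner \<Rightarrow> ereal) \<Rightarrow> 'a \<Rightarrow> ereal" where
  "conjugate g z = (SUP x. ereal (z \<bullet> x) - g x)"

definition is_norm :: "('a::real_vector \<Rightarrow> real) \<Rightarrow> bool" where
  "is_norm N \<longleftrightarrow> (\<forall>x. 0 \<le> N x) \<and> (\<forall>x. N x = 0 \<longleftrightarrow> x = 0)
     \<and> (\<forall>c x. N (c *\<^sub>R x) = \<bar>c\<bar> * N x) \<and> (\<forall>x y. N (x + y) \<le> N x + N y)"

definition opnorm :: "(real^'n \<Rightarrow> real) \<Rightarrow> (real^'m \<Rightarrow> real) \<Rightarrow> real^'n^'m \<Rightarrow> real" where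
  "opnorm Np Nd A = Sup {(v \<bullet> (A *v u)) / (Nd v * Np u) | u v. u \<noteq> 0 \<and> v \<noteq> 0}"

definition bkernel :: "('a::euclidean_space \<Rightarrow> ereal) \<Rightarrow> ('a \<Rightarrow> 'a) \<Rightarrow> bool" where
  "bkernel \<phi> G \<longleftrightarrow> econvex \<phi> \<and> (\<forall>x. \<phi> x \<noteq> -\<infinity>) \<and> interior (edom \<phi>) \<noteq> {}
     \<and> continuous_on (edom \<phi>) \<phi>
     \<and> (\<forall>x\<in>interior (edom \<phi>). ((\<lambda>y. real_of_ereal (\<phi> y)) has_derivative (\<lambda>d. G x \<bullet> d)) (at x))
     \<and> continuous_on (interior (edom \<phi>)) G"

text \<open>Bregman distance d(x,y), meaningful for x in dom \<phi>, y in int dom \<phi>.\<close>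
definition bdist :: "('a::real_inner \<Rightarrow> ereal) \<Rightarrow> ('a \<Rightarrow> 'a) \<Rightarrow> 'a \<Rightarrow> 'a \<Rightarrow> real" where
  "bdist \<phi> G x y = real_of_ereal (\<phi> x) - real_of_ereal (\<phi> y) - G y \<bullet> (x - y)"

definition bprox_obj :: "('a::real_inner \<Rightarrow> ereal) \<Rightarrow> ('a \<Rightarrow> 'a) \<Rightarrow> ('a \<Rightarrow> ereal) \<Rightarrow> 'a \<Rightarrow> 'a \<Rightarrow> 'a \<Rightarrow> ereal" where
  "bprox_obj \<phi> G F y a x = (if x \<in> edom \<phi> then F x + ereal (a \<bullet> x + bdist \<phi> G x y) else \<infinity>)"

definition is_bprox :: "('a::real_inner \<Rightarrow> ereal) \<Rightarrow> ('a \<Rightarrow> 'a) \<Rightarrow> ('a \<Rightarrow> ereal) \<Rightarrow> 'a \<Rightarrow> 'a \<Rightarrow> 'a \<Rightarrow> bool" where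
  "is_bprox \<phi> G F y a x \<longleftrightarrow> (\<forall>x'. bprox_obj \<phi> G F y a x \<le> bprox_obj \<phi> G F y a x')"

definition bprox :: "('a::real_inner \<Rightarrow> ereal) \<Rightarrow> ('a \<Rightarrow> 'a) \<Rightarrow> ('a \<Rightarrow> ereal) \<Rightarrow> 'a \<Rightarrow> 'a \<Rightarrow> 'a" where
  "bprox \<phi> G F y a = (THE x. is_bprox \<phi> G F y a x)"

definition bprox_welldef :: "('a::euclidean_space \<Rightarrow> ereal) \<Rightarrow> ('a \<Rightarrow> 'a) \<Rightarrow> ('a \<Rightarrow> ereal) \<Rightarrow> bool" where
  "bprox_welldef \<phi> G F \<longleftrightarrow> (\<forall>a. \<forall>y\<in>interior (edom \<phi>).
      (\<exists>!x. is_bprox \<phi> G F y a x) \<and> (\<forall>x. is_bprox \<phi> G F y a x \<longrightarrow> x \<in> interior (edom \<phi>)))"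

end

theory Submission
  imports Defs
begin

lemma econvex_comb:
  assumes "econvex F" "\<forall>x. F x \<noteq> -\<infinity>" "a \<in> edom F" "b \<in> edom F" "0 \<le> t" "t \<le> 1"
  shows "(1-t) *\<^sub>R a + t *\<^sub>R b \<in> edom F \<and>
     F ((1-t) *\<^sub>R a + t *\<^sub>R b) \<le> ereal ((1-t) * real_of_ereal (F a) + t * real_of_ereal (F b))"
proof -
  have fa: "F a = ereal (real_of_ereal (F a))" using assms(2,3) by (auto simp: edom_def ereal_real)
  have fb: "F b = ereal (real_of_ereal (F b))" using assms(2,4) by (auto simp: edom_def ereal_real)
  have "(a, real_of_ereal (F a)) \<in> eepigraph F" "(b, real_of_ereal (F b)) \<in> eepigraph F"
    unfolding eepigraph_def using fa fb by auto
  then have "(1-t) *\<^sub>R (a, real_of_ereal (F a)) + t *\<^sub>R (b, real_of_ereal (F b)) \<in> eepigraph F"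
    using assms(1,5,6) unfolding econvex_def by (intro convexD) auto
  then have *: "F ((1-t) *\<^sub>R a + t *\<^sub>R b) \<le> ereal ((1-t) * real_of_ereal (F a) + t * real_of_ereal (F b))"
    unfolding eepigraph_def by simp
  then show ?thesis unfolding edom_def using le_less_trans by fastforce
qed

lemma deriv_line:
  fixes R :: "'a::real_inner \<Rightarrow> real"
  assumes "(R has_derivative (\<lambda>d. g \<bullet> d)) (at x)"
  shows "((\<lambda>t. (R (x + t *\<^sub>R (u - x)) - R x) / t) \<longlongrightarrow> g \<bullet> (u - x)) (at_right 0)"
proof -
  have l: "((\<lambda>t. x + t *\<^sub>R (u - x)) has_derivative (\<lambda>t. t *\<^sub>R (u - x))) (at 0)"
    by (auto intro!: derivative_eq_intros)
  have "((\<lambda>t. R (x + t *\<^sub>R (u - x))) has_derivative (\<lambda>t. t * (g \<bullet> (u - x)))) (at 0)"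
  proof -
    have "(R has_derivative (\<lambda>d. g \<bullet> d)) (at ((\<lambda>t. x + t *\<^sub>R (u - x)) 0))" using assms by simp
    from has_derivative_compose[OF l this] show ?thesis by simp
  qed
  then have "((\<lambda>t. R (x + t *\<^sub>R (u - x))) has_field_derivative (g \<bullet> (u - x))) (at 0)"
    by (rule has_derivative_imp_has_field_derivative) auto
  then have "((\<lambda>t. (R (x + (0+t) *\<^sub>R (u - x)) - R (x + 0 *\<^sub>R (u - x))) / t) \<longlongrightarrow> g \<bullet> (u - x)) (at 0)"
    unfolding DERIV_def by simp
  then show ?thesis by (simp add: filterlim_at_split)
qed

lemma lim_ge:
  fixes q :: "real \<Rightarrow> real"
  assumes "t0 > 0" "\<And>t. 0 < t \<Longrightarrow> t \<le> t0 \<Longrightarrow> C \<le> q t" "(q \<longlongrightarrow> D) (at_right 0)"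
  shows "C \<le> D"
proof (rule tendsto_le[OF _ assms(3) tendsto_const])
  show "at_right (0::real) \<noteq> bot" by simp
  show "\<forall>\<^sub>F t in at_right 0. C \<le> q t"
    unfolding eventually_at_right_field using assms(1,2) by (intro exI[of _ t0]) auto
qed




lemma is_norm_sum:
  assumes "is_norm N" "finite S"
  shows "N (sum v S) \<le> (\<Sum>i\<in>S. N (v i))"
  using assms(2)
proof (induction S rule: finite_induct)
  case empty
  have "N 0 = 0" using assms(1) unfolding is_norm_def by blast
  then show ?case by simp
next
  case (insert a S)
  have "N (sum v (insert a S)) = N (v a + sum v S)" using insert by simp
  also have "\<dots> \<le> N (v a) + N (sum v S)" using assms(1) unfolding is_norm_def by blast
  finally show ?case using insert by simp
qed

lemma is_norm_upper:
  fixes N :: "'a::euclidean_space \<Rightarrow> real"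
  assumes "is_norm N"
  shows "\<exists>C. \<forall>x. N x \<le> C * norm x"
proof -
  define C where "C = (\<Sum>b\<in>Basis. N b)"
  have "N x \<le> C * norm x" for x
  proof -
    have "N x = N (\<Sum>b\<in>Basis. (x \<bullet> b) *\<^sub>R b)" by (simp add: euclidean_representation)
    also have "\<dots> \<le> (\<Sum>b\<in>Basis. N ((x \<bullet> b) *\<^sub>R b))" by (rule is_norm_sum[OF assms]) simp
    also have "\<dots> = (\<Sum>b\<in>Basis. \<bar>x \<bullet> b\<bar> * N b)" using assms unfolding is_norm_def by simp
    also have "\<dots> \<le> (\<Sum>b\<in>Basis. norm x * N b)"
      using assms unfolding is_norm_def by (intro sum_mono mult_right_mono Basis_le_norm) auto
    also have "\<dots> = C * norm x" by (simp add: C_def sum_distrib_left mult.commute)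
    finally show ?thesis .
  qed
  then show ?thesis by blast
qed

lemma is_norm_neg:
  assumes "is_norm N" shows "N (- x) = N x"
proof -
  have "N ((-1) *\<^sub>R x) = \<bar>-1\<bar> * N x" using assms unfolding is_norm_def by blast
  then show ?thesis by simp
qed

lemma is_norm_lower:
  fixes N :: "'a::euclidean_space \<Rightarrow> real"
  assumes "is_norm N"
  shows "\<exists>c>0. \<forall>x. c * norm x \<le> N x"
proof -
  obtain C where C: "\<And>x. N x \<le> C * norm x" using is_norm_upper[OF assms] by blast
  have lip: "\<bar>N x - N y\<bar> \<le> C * norm (x - y)" for x y
  proof -
    have "N x \<le> N (x - y) + N y" using assms unfolding is_norm_def by (metis diff_add_cancel)
    moreover have "N y \<le> N (y - x) + N x" using assms unfolding is_norm_def by (metis diff_add_cancel)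
    moreover have "N (y - x) = N (x - y)" using is_norm_neg[OF assms, of "x - y"] by simp
    ultimately show ?thesis using C[of "x - y"] by linarith
  qed
  have cont: "continuous_on (sphere 0 1) N"
  proof (rule continuous_at_imp_continuous_on, rule ballI)
    fix x :: 'a
    show "isCont N x" unfolding isCont_def
    proof (rule tendstoI)
      fix e :: real assume e: "e > 0"
      have "C \<ge> 0"
      proof -
        have "norm (SOME b::'a. b \<in> Basis) = 1" by (simp add: SOME_Basis)
        moreover have "0 \<le> N (SOME b::'a. b \<in> Basis)" using assms unfolding is_norm_def by blast
        ultimately show ?thesis using C[of "SOME b. b \<in> Basis"] by simp
      qed
      show "\<forall>\<^sub>F y in at x. dist (N y) (N x) < e"
        unfolding eventually_at
      proof (intro exI[of _ "e / (C + 1)"] conjI ballI impI)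
        show "e / (C + 1) > 0" using e \<open>C \<ge> 0\<close> by simp
        fix y assume "y \<in> UNIV" "y \<noteq> x \<and> dist y x < e / (C + 1)"
        then have d: "norm (y - x) < e / (C + 1)" by (simp add: dist_norm)

        have "dist (N y) (N x) \<le> C * norm (y - x)" using lip[of y x] by (simp add: dist_real_def)
        also have "\<dots> \<le> (C + 1) * norm (y - x)" by (simp add: distrib_right)
        also have "\<dots> < (C + 1) * (e / (C + 1))" using d \<open>C \<ge> 0\<close> by (intro mult_strict_left_mono) auto
        also have "\<dots> = e" using \<open>C \<ge> 0\<close> by simp
        finally show "dist (N y) (N x) < e" .
      qed
    qed
  qed
  have ne: "sphere (0::'a) 1 \<noteq> {}"
    using SOME_Basis norm_Basis by (metis dist_0_norm mem_sphere empty_iff)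
  obtain x0 where x0: "x0 \<in> sphere 0 1" "\<And>y. y \<in> sphere 0 1 \<Longrightarrow> N x0 \<le> N y"
    using continuous_attains_inf[OF compact_sphere ne cont] by blast
  have "x0 \<noteq> 0" using x0(1) by auto
  then have pos: "N x0 > 0" using assms unfolding is_norm_def by (metis less_eq_real_def)
  have "N x0 * norm x \<le> N x" for x
  proof (cases "x = 0")
    case True then show ?thesis using assms unfolding is_norm_def by simp
  next
    case False
    have "x /\<^sub>R norm x \<in> sphere 0 1" using False by simp
    then have "N x0 \<le> N (x /\<^sub>R norm x)" by (rule x0(2))
    also have "\<dots> = N x / norm x" using assms unfolding is_norm_def by (simp add: divide_inverse mult.commute)
    finally show ?thesis using False by (simp add: field_simps)
  qed
  then show ?thesis using pos by blast
qed




lemma opnorm_bound: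
  fixes A :: "real^'n^'m" and Np :: "real^'n \<Rightarrow> real" and Nd :: "real^'m \<Rightarrow> real"
  assumes "is_norm Np" "is_norm Nd"
  shows "\<bar>v \<bullet> (A *v u)\<bar> \<le> opnorm Np Nd A * Nd v * Np u"
proof (cases "u = 0 \<or> v = 0")
  case True
  then have "Nd v * Np u = 0" using assms unfolding is_norm_def by auto
  then show ?thesis using True by auto
next
  case False
  obtain cp where cp: "cp > 0" "\<And>x. cp * norm x \<le> Np x" using is_norm_lower[OF assms(1)] by blast
  obtain cd where cd: "cd > 0" "\<And>x. cd * norm x \<le> Nd x" using is_norm_lower[OF assms(2)] by blast
  obtain K where K: "K > 0" "\<And>x. norm (A *v x) \<le> norm x * K"
    using bounded_linear.pos_bounded[OF matrix_vector_mul_bounded_linear[of A]] by blast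
  define S where "S = {(v \<bullet> (A *v u)) / (Nd v * Np u) | u v. u \<noteq> 0 \<and> v \<noteq> 0}"
  have bdd: "bdd_above S"
  proof (rule bdd_aboveI)
    fix r assume "r \<in> S"
    then obtain u v where r: "r = (v \<bullet> (A *v u)) / (Nd v * Np u)" "u \<noteq> 0" "v \<noteq> 0" unfolding S_def by blast
    have pu: "Np u > 0" "Nd v > 0" using r assms unfolding is_norm_def by (metis less_eq_real_def)+
    have "v \<bullet> (A *v u) \<le> norm v * norm (A *v u)"
      using Cauchy_Schwarz_ineq2[of v "A *v u"] by linarith
    also have "\<dots> \<le> norm v * (norm u * K)" using K(2)[of u] by (rule mult_left_mono) simp
    also have "\<dots> \<le> (Nd v / cd) * ((Np u / cp) * K)"
      using cp cd K(1) pu by (intro mult_mono) (auto simp: field_simps mult.commute)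
    also have "\<dots> = (K / (cd * cp)) * (Nd v * Np u)" by (simp add: field_simps)
    finally have "r * (Nd v * Np u) \<le> (K / (cd * cp)) * (Nd v * Np u)" using pu r(1) by simp
    then show "r \<le> K / (cd * cp)" using pu by (meson mult_pos_pos mult_right_le_imp_le)
  qed
  have pos: "Np u > 0" "Nd v > 0" "Nd (-v) = Nd v" using False assms is_norm_neg[OF assms(2)] unfolding is_norm_def
    by (metis less_eq_real_def)+
  have "(v \<bullet> (A *v u)) / (Nd v * Np u) \<in> S" "((-v) \<bullet> (A *v u)) / (Nd (-v) * Np u) \<in> S"
    unfolding S_def using False by (blast, (intro CollectI exI[of _ u] exI[of _ "-v"]; auto))
  then have "(v \<bullet> (A *v u)) / (Nd v * Np u) \<le> opnorm Np Nd A" "((-v) \<bullet> (A *v u)) / (Nd v * Np u) \<le> opnorm Np Nd A"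
    using cSup_upper[OF _ bdd] pos(3) unfolding opnorm_def S_def[symmetric] by auto
  then show ?thesis using pos by (simp add: field_simps abs_le_iff)
qed




lemma three_point:
  "bdist \<phi> G u y - bdist \<phi> G u xp - bdist \<phi> G xp y = (G xp - G y) \<bullet> (u - xp)"
  unfolding bdist_def by (simp add: algebra_simps inner_diff_right inner_diff_left)

lemma kernel_finite:
  assumes "bkernel \<phi> G" "u \<in> edom \<phi>"
  shows "\<phi> u = ereal (real_of_ereal (\<phi> u))"
  using assms unfolding bkernel_def edom_def by (auto simp: ereal_real)

lemma prox_vi:
  fixes \<phi> :: "'a::euclidean_space \<Rightarrow> ereal"
  assumes kern: "bkernel \<phi> G"
    and Fcomb: "\<And>a b t. a \<in> edom F \<Longrightarrow> b \<in> edom F \<Longrightarrow> 0 \<le> t \<Longrightarrow> t \<le> 1 \<Longrightarrow>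
        (1-t) *\<^sub>R a + t *\<^sub>R b \<in> edom F \<and>
        F ((1-t) *\<^sub>R a + t *\<^sub>R b) \<le> ereal ((1-t) * real_of_ereal (F a) + t * real_of_ereal (F b))"
    and Fnm: "\<forall>x. F x \<noteq> -\<infinity>"
    and xp: "is_bprox \<phi> G F y a xp" "xp \<in> interior (edom \<phi>)"
    and u: "u \<in> edom \<phi>" "u \<in> edom F"
  shows "xp \<in> edom F \<and> bdist \<phi> G xp y + bdist \<phi> G u xp - bdist \<phi> G u y
           \<le> real_of_ereal (F u) - real_of_ereal (F xp) + a \<bullet> (u - xp)"
proof -
  have xpd: "xp \<in> edom \<phi>" using xp(2) interior_subset by blast
  have phicomb: "(1-t) *\<^sub>R p + t *\<^sub>R r \<in> edom \<phi>" if "p \<in> edom \<phi>" "r \<in> edom \<phi>" "0 \<le> t" "t \<le> 1" for p r t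
    using econvex_comb[of \<phi> p r t] kern that unfolding bkernel_def by blast
  have Ffin: "F w = ereal (real_of_ereal (F w))" if "w \<in> edom F" for w
    using that Fnm unfolding edom_def by (auto simp: ereal_real)
  have min: "bprox_obj \<phi> G F y a xp \<le> bprox_obj \<phi> G F y a w" for w
    using xp(1) unfolding is_bprox_def by blast
  have "bprox_obj \<phi> G F y a u < \<infinity>"
  proof -
    obtain r where "F u = ereal r" using Ffin[OF u(2)] by blast
    then show ?thesis using u unfolding bprox_obj_def by simp
  qed
  then have "bprox_obj \<phi> G F y a xp < \<infinity>" using min[of u] by auto
  then have xpF: "xp \<in> edom F" using xpd unfolding bprox_obj_def edom_def by auto
  define Fu where "Fu = real_of_ereal (F u)"
  define Fx where "Fx = real_of_ereal (F xp)"
  define C where "C = Fu - Fx + a \<bullet> (u - xp) - G y \<bullet> (u - xp)"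
  define R where "R = (\<lambda>w. real_of_ereal (\<phi> w))"
  have key: "- C \<le> (R (xp + t *\<^sub>R (u - xp)) - R xp) / t" if t: "0 < t" "t \<le> 1" for t
  proof -
    define xt where "xt = xp + t *\<^sub>R (u - xp)"
    have xt: "xt = (1-t) *\<^sub>R xp + t *\<^sub>R u" unfolding xt_def by (simp add: algebra_simps)
    have xtd: "xt \<in> edom \<phi>" unfolding xt using phicomb xpd u t by simp
    have c: "xt \<in> edom F" "F xt \<le> ereal ((1-t) * Fx + t * Fu)"
      unfolding xt Fx_def Fu_def using Fcomb[OF xpF u(2)] t by auto
    have "bprox_obj \<phi> G F y a xp \<le> bprox_obj \<phi> G F y a xt" by (rule min)
    moreover obtain r1 where r1: "F xp = ereal r1" using Ffin[OF xpF] by blast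
    moreover obtain r2 where r2: "F xt = ereal r2" using Ffin[OF c(1)] by blast
    ultimately have m: "Fx + (a \<bullet> xp + bdist \<phi> G xp y) \<le> real_of_ereal (F xt) + (a \<bullet> xt + bdist \<phi> G xt y)"
      unfolding bprox_obj_def Fx_def using xpd xtd by simp
    have "real_of_ereal (F xt) \<le> (1-t) * Fx + t * Fu"
      using c(2) r2 by simp
    moreover have "bdist \<phi> G xt y - bdist \<phi> G xp y = R xt - R xp - t * (G y \<bullet> (u - xp))"
      unfolding bdist_def R_def xt_def by (simp add: algebra_simps inner_diff_right inner_diff_left)
    moreover have "a \<bullet> xt - a \<bullet> xp = t * (a \<bullet> (u - xp))" unfolding xt_def by (simp add: inner_add_right)
    ultimately have "0 \<le> t * C + (R xt - R xp)" using m unfolding C_def by (simp add: algebra_simps)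
    then have "- C * t \<le> (R xt - R xp)" by (simp add: algebra_simps)
    then show ?thesis using t unfolding xt_def by (simp add: field_simps)
  qed
  have der: "(R has_derivative (\<lambda>d. G xp \<bullet> d)) (at xp)"
    using kern xp(2) unfolding bkernel_def R_def by blast
  have "- C \<le> G xp \<bullet> (u - xp)"
    by (rule lim_ge[of 1, OF _ key deriv_line[OF der]]) auto
  then have "0 \<le> Fu - Fx + a \<bullet> (u - xp) + (G xp - G y) \<bullet> (u - xp)"
    unfolding C_def by (simp add: inner_diff_left)
  then show ?thesis using xpF three_point[of \<phi> G u y xp] unfolding Fu_def Fx_def by linarith
qed




lemma conj_comb:
  fixes g :: "'a::real_inner \<Rightarrow> ereal"
  assumes gnm: "\<forall>x. g x \<noteq> -\<infinity>"
    and a: "conjugate g a = ereal ra" and b: "conjugate g b = ereal rb" and t: "0 \<le> t" "t \<le> 1"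
  shows "conjugate g ((1-t) *\<^sub>R a + t *\<^sub>R b) \<le> ereal ((1-t) * ra + t * rb)"
  unfolding conjugate_def
proof (rule SUP_least)
  fix x
  show "ereal (((1-t) *\<^sub>R a + t *\<^sub>R b) \<bullet> x) - g x \<le> ereal ((1-t) * ra + t * rb)"
  proof (cases "g x")
    case (real gx)
    have "ereal (a \<bullet> x) - g x \<le> conjugate g a" unfolding conjugate_def by (rule SUP_upper) simp
    then have 1: "a \<bullet> x - gx \<le> ra" using a real by simp
    have "ereal (b \<bullet> x) - g x \<le> conjugate g b" unfolding conjugate_def by (rule SUP_upper) simp
    then have 2: "b \<bullet> x - gx \<le> rb" using b real by simp
    have "((1-t) *\<^sub>R a + t *\<^sub>R b) \<bullet> x - gx = (1-t) * (a \<bullet> x - gx) + t * (b \<bullet> x - gx)"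
      by (simp add: inner_add_left algebra_simps)
    also have "\<dots> \<le> (1-t) * ra + t * rb" using 1 2 t by (intro add_mono mult_left_mono) auto
    finally show ?thesis using real by simp
  next
    case PInf then show ?thesis by simp
  next
    case MInf then show ?thesis using gnm by simp
  qed
qed

lemma conj_lsc:
  fixes g :: "'a::real_inner \<Rightarrow> ereal"
  assumes gnm: "\<forall>x. g x \<noteq> -\<infinity>"
    and zl: "zz \<longlonglongrightarrow> zh" and le: "\<And>j. conjugate g (zz j) \<le> ereal (e j)" and el: "e \<longlonglongrightarrow> c"
  shows "conjugate g zh \<le> ereal c"
  unfolding conjugate_def
proof (rule SUP_least)
  fix x
  show "ereal (zh \<bullet> x) - g x \<le> ereal c"
  proof (cases "g x")
    case (real gx)
    have "zz j \<bullet> x - gx \<le> e j" for j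
    proof -
      have "ereal (zz j \<bullet> x) - g x \<le> conjugate g (zz j)" unfolding conjugate_def by (rule SUP_upper) simp
      then show ?thesis using le[of j] real by (metis ereal_minus(1) ereal_less_eq(3) order_trans)
    qed
    moreover have "(\<lambda>j. zz j \<bullet> x - gx) \<longlonglongrightarrow> zh \<bullet> x - gx" by (intro tendsto_intros zl)
    ultimately have "zh \<bullet> x - gx \<le> c" using LIMSEQ_le[of "\<lambda>j. zz j \<bullet> x - gx" _ e c] el by blast
    then show ?thesis using real by simp
  next
    case PInf then show ?thesis by simp
  next
    case MInf then show ?thesis using gnm by simp
  qed
qed



locale bcv =
  fixes f :: "real^'n \<Rightarrow> ereal" and h :: "real^'n \<Rightarrow> ereal" and gh :: "real^'n \<Rightarrow> real^'n"
    and g :: "real^'m \<Rightarrow> ereal" and A :: "real^'n^'m"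
    and \<phi>p :: "real^'n \<Rightarrow> ereal" and Gp :: "real^'n \<Rightarrow> real^'n"
    and \<phi>d :: "real^'m \<Rightarrow> ereal" and Gd :: "real^'m \<Rightarrow> real^'m"
    and Np :: "real^'n \<Rightarrow> real" and Nd :: "real^'m \<Rightarrow> real"
    and L \<sigma> \<tau> :: real
    and x :: "nat \<Rightarrow> real^'n" and z :: "nat \<Rightarrow> real^'m"
    and p :: "nat \<Rightarrow> real^'m" and q :: "nat \<Rightarrow> real^'n"
  assumes f_cc: "eclosed f" "econvex f"
    and g_cc: "eproper g"
    and h_cc: "econvex h"
    and h_dom: "open (edom h)"
    and h_diff: "\<forall>y\<in>edom h. \<bar>h y\<bar> \<noteq> \<infinity> \<and>
                  ((\<lambda>w. real_of_ereal (h w)) has_derivative (\<lambda>d. gh y \<bullet> d)) (at y)"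
    and kp: "bkernel \<phi>p Gp" and kd: "bkernel \<phi>d Gd"
    and proxp: "bprox_welldef \<phi>p Gp (\<lambda>y. ereal \<tau> * f y)"
    and proxd: "bprox_welldef \<phi>d Gd (\<lambda>w. ereal \<sigma> * conjugate g w)"
    and Np_norm: "is_norm Np" and Nd_norm: "is_norm Nd"
    and dp_strong: "\<forall>y\<in>edom \<phi>p. \<forall>y'\<in>interior (edom \<phi>p). bdist \<phi>p Gp y y' \<ge> (Np (y - y'))\<^sup>2 / 2"
    and dd_strong: "\<forall>w\<in>edom \<phi>d. \<forall>w'\<in>interior (edom \<phi>d). bdist \<phi>d Gd w w' \<ge> (Nd (w - w'))\<^sup>2 / 2"
    and dom_sub: "edom \<phi>p \<subseteq> edom h"
    and L_pos: "L > 0"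
    and h_smooth: "\<forall>y\<in>edom \<phi>p. \<forall>y'\<in>interior (edom \<phi>p).
         real_of_ereal (h y) - real_of_ereal (h y') - gh y' \<bullet> (y - y') \<le> L * bdist \<phi>p Gp y y'"
    and sol_exists: "\<exists>xs zs. xs \<in> edom \<phi>p \<and> zs \<in> edom \<phi>d \<and>
         xs \<in> edom h \<and> - (transpose A *v zs) - gh xs \<in> subdiff f xs \<and> A *v xs \<in> subdiff (conjugate g) zs"
    and closed_dp: "\<forall>y\<in>edom \<phi>p. \<forall>c. closed {y'\<in>interior (edom \<phi>p). bdist \<phi>p Gp y y' \<le> c}"
    and closed_dd: "\<forall>w\<in>edom \<phi>d. \<forall>c. closed {w'\<in>interior (edom \<phi>d). bdist \<phi>d Gd w w' \<le> c}"
    and step: "\<sigma> > 0" "\<tau> > 0" "\<sigma> * \<tau> * (opnorm Np Nd A)\<^sup>2 + \<tau> * L < 1"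
    and x0: "x 0 \<in> interior (edom \<phi>p)"
    and z0: "z 0 \<in> interior (edom \<phi>d)"
    and iterx: "\<And>k. x (Suc k) = bprox \<phi>p Gp (\<lambda>y. ereal \<tau> * f y) (x k)
                          (\<tau> *\<^sub>R (transpose A *v p k) + \<tau> *\<^sub>R gh (x k))"
    and iterz: "\<And>k. z (Suc k) = bprox \<phi>d Gd (\<lambda>w. ereal \<sigma> * conjugate g w) (z k) (- \<sigma> *\<^sub>R (A *v q k))"
    and pq: "(\<forall>k. p k = z k \<and> q k = 2 *\<^sub>R x (Suc k) - x k) \<or> (\<forall>k. p k = 2 *\<^sub>R z (Suc k) - z k \<and> q k = x k)"
begin

lemma nm_of_sub: assumes "\<bar>Fa\<bar> \<noteq> \<infinity>" "Fa + ereal r \<le> Fy" shows "Fy \<noteq> -\<infinity>"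
  using assms by (cases Fa; cases Fy) auto

definition issol where
  "issol xs zs \<longleftrightarrow> xs \<in> edom \<phi>p \<and> zs \<in> edom \<phi>d \<and>
         xs \<in> edom h \<and> - (transpose A *v zs) - gh xs \<in> subdiff f xs \<and> A *v xs \<in> subdiff (conjugate g) zs"

abbreviation "fr y \<equiv> real_of_ereal (f y)"
abbreviation "hr y \<equiv> real_of_ereal (h y)"
abbreviation "cr w \<equiv> real_of_ereal (conjugate g w)"
abbreviation "M \<equiv> opnorm Np Nd A"

lemma transp: "(transpose A *v v) \<bullet> u = v \<bullet> (A *v u)"
  by (metis dot_lmul_matrix transpose_transpose vector_transpose_matrix)

lemma subdiff_ineq:
  assumes "w \<in> subdiff F a" "y \<in> edom F" "\<forall>y. F y \<noteq> -\<infinity>"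
  shows "a \<in> edom F" "y \<in> edom F" "real_of_ereal (F a) + w \<bullet> (y - a) \<le> real_of_ereal (F y)"
proof -
  have fa: "\<bar>F a\<bar> \<noteq> \<infinity>" and le: "F a + ereal (w \<bullet> (y - a)) \<le> F y"
    using assms(1) unfolding subdiff_def by auto
  obtain ra where ra: "F a = ereal ra" using fa by (cases "F a") auto
  obtain ry where ry: "F y = ereal ry" using assms(2,3) unfolding edom_def by (cases "F y") auto
  show "a \<in> edom F" using ra unfolding edom_def by simp
  show "y \<in> edom F" by fact
  show "real_of_ereal (F a) + w \<bullet> (y - a) \<le> real_of_ereal (F y)" using le ra ry by simp
qed

lemma sol_ex: "\<exists>xs zs. issol xs zs" using sol_exists unfolding issol_def by blast

lemma f_nm: "\<forall>y. f y \<noteq> -\<infinity>"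
proof -
  obtain xs zs where s: "issol xs zs" using sol_ex by blast
  then have "- (transpose A *v zs) - gh xs \<in> subdiff f xs" unfolding issol_def by blast
  then have "\<bar>f xs\<bar> \<noteq> \<infinity>" "\<And>y. f xs + ereal ((- (transpose A *v zs) - gh xs) \<bullet> (y - xs)) \<le> f y"
    unfolding subdiff_def by auto
  then show ?thesis by (metis nm_of_sub)
qed

lemma c_nm: "\<forall>w. conjugate g w \<noteq> -\<infinity>"
proof -
  obtain xs zs where s: "issol xs zs" using sol_ex by blast
  then have "A *v xs \<in> subdiff (conjugate g) zs" unfolding issol_def by blast
  then have "\<bar>conjugate g zs\<bar> \<noteq> \<infinity>" "\<And>y. conjugate g zs + ereal ((A *v xs) \<bullet> (y - zs)) \<le> conjugate g y"
    unfolding subdiff_def by auto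
  then show ?thesis by (metis nm_of_sub)
qed

lemma g_nm: "\<forall>x. g x \<noteq> -\<infinity>" using g_cc unfolding eproper_def by blast

lemma f_fin: "y \<in> edom f \<Longrightarrow> f y = ereal (fr y)"
  using f_nm unfolding edom_def by (cases "f y") auto

lemma c_fin: "w \<in> edom (conjugate g) \<Longrightarrow> conjugate g w = ereal (cr w)"
  using c_nm unfolding edom_def by (cases "conjugate g w") auto

lemma h_fin: "y \<in> edom h \<Longrightarrow> h y = ereal (hr y)"
  using h_diff by (cases "h y") auto

lemma edom_tf: "edom (\<lambda>y. ereal \<tau> * f y) = edom f"
proof -
  have "ereal \<tau> * f y < \<infinity> \<longleftrightarrow> f y < \<infinity>" for y
    using step(2) f_nm by (cases "f y") auto
  then show ?thesis unfolding edom_def by auto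
qed

end

lemma lim_le:
  fixes q :: "real \<Rightarrow> real"
  assumes "t0 > 0" "\<And>t. 0 < t \<Longrightarrow> t \<le> t0 \<Longrightarrow> q t \<le> C" "(q \<longlongrightarrow> D) (at_right 0)"
  shows "D \<le> C"
proof (rule tendsto_le[OF _ tendsto_const assms(3)])
  show "at_right (0::real) \<noteq> bot" by simp
  show "\<forall>\<^sub>F t in at_right 0. q t \<le> C"
    unfolding eventually_at_right_field using assms(1,2) by (intro exI[of _ t0]) auto
qed

context bcv begin

lemma h_nm: "\<forall>y. h y \<noteq> -\<infinity>"
proof
  fix y show "h y \<noteq> -\<infinity>"
  proof (cases "y \<in> edom h")
    case True then show ?thesis using h_diff by auto
  next
    case False then show ?thesis unfolding edom_def by auto
  qed
qed

lemma h_grad: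
  assumes a: "a \<in> edom h" and b: "b \<in> edom h"
  shows "hr a + gh a \<bullet> (b - a) \<le> hr b"
proof -
  have key: "(hr (a + t *\<^sub>R (b - a)) - hr a) / t \<le> hr b - hr a" if t: "0 < t" "t \<le> 1" for t
  proof -
    have e: "a + t *\<^sub>R (b - a) = (1-t) *\<^sub>R a + t *\<^sub>R b" by (simp add: algebra_simps)
    have c: "(1-t) *\<^sub>R a + t *\<^sub>R b \<in> edom h"
      "h ((1-t) *\<^sub>R a + t *\<^sub>R b) \<le> ereal ((1-t) * hr a + t * hr b)"
      using econvex_comb[OF h_cc h_nm a b] t by auto
    have "hr (a + t *\<^sub>R (b - a)) \<le> (1-t) * hr a + t * hr b"
      using c h_fin[OF c(1)] unfolding e by (metis ereal_less_eq(3))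
    then have "hr (a + t *\<^sub>R (b - a)) - hr a \<le> t * (hr b - hr a)" by (simp add: algebra_simps)
    then show ?thesis using t by (simp add: field_simps)
  qed
  have der: "((\<lambda>w. hr w) has_derivative (\<lambda>d. gh a \<bullet> d)) (at a)" using h_diff a by blast
  have "gh a \<bullet> (b - a) \<le> hr b - hr a"
    by (rule lim_le[of 1, OF _ key deriv_line[OF der]]) auto
  then show ?thesis by simp
qed

lemma edom_sc: "edom (\<lambda>w. ereal \<sigma> * conjugate g w) = edom (conjugate g)"
proof -
  have "ereal \<sigma> * conjugate g y < \<infinity> \<longleftrightarrow> conjugate g y < \<infinity>" for y
    using step(1) c_nm by (cases "conjugate g y") auto
  then show ?thesis unfolding edom_def by auto
qed

lemma comb_tf:
  assumes "a \<in> edom (\<lambda>y. ereal \<tau> * f y)" "b \<in> edom (\<lambda>y. ereal \<tau> * f y)" "0 \<le> t" "t \<le> 1"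
  shows "(1-t) *\<^sub>R a + t *\<^sub>R b \<in> edom (\<lambda>y. ereal \<tau> * f y) \<and>
        ereal \<tau> * f ((1-t) *\<^sub>R a + t *\<^sub>R b) \<le> ereal ((1-t) * real_of_ereal (ereal \<tau> * f a) + t * real_of_ereal (ereal \<tau> * f b))"
proof -
  have ab: "a \<in> edom f" "b \<in> edom f" using assms edom_tf by auto
  have c: "(1-t) *\<^sub>R a + t *\<^sub>R b \<in> edom f" "f ((1-t) *\<^sub>R a + t *\<^sub>R b) \<le> ereal ((1-t) * fr a + t * fr b)"
    using econvex_comb[OF f_cc(2) f_nm ab] assms(3,4) by auto
  have "ereal \<tau> * f ((1-t) *\<^sub>R a + t *\<^sub>R b) \<le> ereal \<tau> * ereal ((1-t) * fr a + t * fr b)"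
    using c(2) step(2) by (intro ereal_mult_left_mono) auto
  moreover have "real_of_ereal (ereal \<tau> * f a) = \<tau> * fr a" "real_of_ereal (ereal \<tau> * f b) = \<tau> * fr b"
    using f_fin[OF ab(1)] f_fin[OF ab(2)] by (metis real_of_ereal.simps(1) times_ereal.simps(1))+
  ultimately show ?thesis using c(1) edom_tf by (simp add: algebra_simps)
qed

lemma comb_sc:
  assumes "a \<in> edom (\<lambda>w. ereal \<sigma> * conjugate g w)" "b \<in> edom (\<lambda>w. ereal \<sigma> * conjugate g w)" "0 \<le> t" "t \<le> 1"
  shows "(1-t) *\<^sub>R a + t *\<^sub>R b \<in> edom (\<lambda>w. ereal \<sigma> * conjugate g w) \<and>
        ereal \<sigma> * conjugate g ((1-t) *\<^sub>R a + t *\<^sub>R b) \<le> ereal ((1-t) * real_of_ereal (ereal \<sigma> * conjugate g a) + t * real_of_ereal (ereal \<sigma> * conjugate g b))"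
proof -
  have ab: "a \<in> edom (conjugate g)" "b \<in> edom (conjugate g)" using assms edom_sc by auto
  have c2: "conjugate g ((1-t) *\<^sub>R a + t *\<^sub>R b) \<le> ereal ((1-t) * cr a + t * cr b)"
    using conj_comb[OF g_nm c_fin[OF ab(1)] c_fin[OF ab(2)]] assms(3,4) by auto
  then have c1: "(1-t) *\<^sub>R a + t *\<^sub>R b \<in> edom (conjugate g)" unfolding edom_def
    using le_less_trans by fastforce
  have "ereal \<sigma> * conjugate g ((1-t) *\<^sub>R a + t *\<^sub>R b) \<le> ereal \<sigma> * ereal ((1-t) * cr a + t * cr b)"
    using c2 step(1) by (intro ereal_mult_left_mono) auto
  moreover have "real_of_ereal (ereal \<sigma> * conjugate g a) = \<sigma> * cr a" "real_of_ereal (ereal \<sigma> * conjugate g b) = \<sigma> * cr b"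
    using c_fin[OF ab(1)] c_fin[OF ab(2)] by (metis real_of_ereal.simps(1) times_ereal.simps(1))+
  ultimately show ?thesis using c1 edom_sc by (simp add: algebra_simps)
qed

lemma tf_nm: "\<forall>y. ereal \<tau> * f y \<noteq> -\<infinity>"
proof
  fix y show "ereal \<tau> * f y \<noteq> -\<infinity>" using f_nm step(2) by (cases "f y") auto
qed

lemma sc_nm: "\<forall>w. ereal \<sigma> * conjugate g w \<noteq> -\<infinity>"
proof
  fix w show "ereal \<sigma> * conjugate g w \<noteq> -\<infinity>" using c_nm step(1) by (cases "conjugate g w") auto
qed

lemma iter_step:
  "x k \<in> interior (edom \<phi>p) \<and> z k \<in> interior (edom \<phi>d)
   \<and> is_bprox \<phi>p Gp (\<lambda>y. ereal \<tau> * f y) (x k) (\<tau> *\<^sub>R (transpose A *v p k) + \<tau> *\<^sub>R gh (x k)) (x (Suc k))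
   \<and> is_bprox \<phi>d Gd (\<lambda>w. ereal \<sigma> * conjugate g w) (z k) (- \<sigma> *\<^sub>R (A *v q k)) (z (Suc k))
   \<and> x (Suc k) \<in> interior (edom \<phi>p) \<and> z (Suc k) \<in> interior (edom \<phi>d)"
proof (induction k)
  have X: "is_bprox \<phi>p Gp (\<lambda>y. ereal \<tau> * f y) (x k) (\<tau> *\<^sub>R (transpose A *v p k) + \<tau> *\<^sub>R gh (x k)) (x (Suc k))
     \<and> x (Suc k) \<in> interior (edom \<phi>p)" if "x k \<in> interior (edom \<phi>p)" for k
  proof -
    have u: "\<exists>!w. is_bprox \<phi>p Gp (\<lambda>y. ereal \<tau> * f y) (x k) (\<tau> *\<^sub>R (transpose A *v p k) + \<tau> *\<^sub>R gh (x k)) w"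
      and i: "\<And>w. is_bprox \<phi>p Gp (\<lambda>y. ereal \<tau> * f y) (x k) (\<tau> *\<^sub>R (transpose A *v p k) + \<tau> *\<^sub>R gh (x k)) w \<Longrightarrow> w \<in> interior (edom \<phi>p)"
      using proxp that unfolding bprox_welldef_def by blast+
    show ?thesis using theI'[OF u] i unfolding iterx[of k] bprox_def by blast
  qed
  have Z: "is_bprox \<phi>d Gd (\<lambda>w. ereal \<sigma> * conjugate g w) (z k) (- \<sigma> *\<^sub>R (A *v q k)) (z (Suc k))
     \<and> z (Suc k) \<in> interior (edom \<phi>d)" if "z k \<in> interior (edom \<phi>d)" for k
  proof -
    have u: "\<exists>!w. is_bprox \<phi>d Gd (\<lambda>w. ereal \<sigma> * conjugate g w) (z k) (- \<sigma> *\<^sub>R (A *v q k)) w"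
      and i: "\<And>w. is_bprox \<phi>d Gd (\<lambda>w. ereal \<sigma> * conjugate g w) (z k) (- \<sigma> *\<^sub>R (A *v q k)) w \<Longrightarrow> w \<in> interior (edom \<phi>d)"
      using proxd that unfolding bprox_welldef_def by blast+
    show ?thesis using theI'[OF u] i unfolding iterz[of k] bprox_def by blast
  qed
  {
    case 0 show ?case using X[of 0] Z[of 0] x0 z0 by blast
  next
    case (Suc k) then show ?case using X[of "Suc k"] Z[of "Suc k"] by blast
  }
qed

lemma x_int: "x k \<in> interior (edom \<phi>p)" using iter_step by blast
lemma z_int: "z k \<in> interior (edom \<phi>d)" using iter_step by blast
lemma x_dom: "x k \<in> edom \<phi>p" using x_int interior_subset by blast
lemma z_dom: "z k \<in> edom \<phi>d" using z_int interior_subset by blast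

lemma vi_x:
  assumes u: "u \<in> edom \<phi>p" "u \<in> edom f"
  shows "x (Suc k) \<in> edom f \<and> bdist \<phi>p Gp (x (Suc k)) (x k) + bdist \<phi>p Gp u (x (Suc k)) - bdist \<phi>p Gp u (x k)
     \<le> \<tau> * fr u - \<tau> * fr (x (Suc k)) + (\<tau> *\<^sub>R (transpose A *v p k) + \<tau> *\<^sub>R gh (x k)) \<bullet> (u - x (Suc k))"
proof -
  have "x (Suc k) \<in> edom (\<lambda>y. ereal \<tau> * f y) \<and> bdist \<phi>p Gp (x (Suc k)) (x k) + bdist \<phi>p Gp u (x (Suc k)) - bdist \<phi>p Gp u (x k)
     \<le> real_of_ereal (ereal \<tau> * f u) - real_of_ereal (ereal \<tau> * f (x (Suc k))) + (\<tau> *\<^sub>R (transpose A *v p k) + \<tau> *\<^sub>R gh (x k)) \<bullet> (u - x (Suc k))"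
    using prox_vi[OF kp comb_tf tf_nm, of "x k" _ "x (Suc k)" u] iter_step u edom_tf by blast
  moreover have "x (Suc k) \<in> edom (\<lambda>y. ereal \<tau> * f y) \<Longrightarrow> real_of_ereal (ereal \<tau> * f (x (Suc k))) = \<tau> * fr (x (Suc k))"
    using f_fin edom_tf by (metis real_of_ereal.simps(1) times_ereal.simps(1))
  moreover have "real_of_ereal (ereal \<tau> * f u) = \<tau> * fr u"
    using f_fin u by (metis real_of_ereal.simps(1) times_ereal.simps(1))
  ultimately show ?thesis using edom_tf by auto
qed

lemma vi_z:
  assumes w: "w \<in> edom \<phi>d" "w \<in> edom (conjugate g)"
  shows "z (Suc k) \<in> edom (conjugate g) \<and> bdist \<phi>d Gd (z (Suc k)) (z k) + bdist \<phi>d Gd w (z (Suc k)) - bdist \<phi>d Gd w (z k)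
     \<le> \<sigma> * cr w - \<sigma> * cr (z (Suc k)) + (- \<sigma> *\<^sub>R (A *v q k)) \<bullet> (w - z (Suc k))"
proof -
  have "z (Suc k) \<in> edom (\<lambda>w. ereal \<sigma> * conjugate g w) \<and> bdist \<phi>d Gd (z (Suc k)) (z k) + bdist \<phi>d Gd w (z (Suc k)) - bdist \<phi>d Gd w (z k)
     \<le> real_of_ereal (ereal \<sigma> * conjugate g w) - real_of_ereal (ereal \<sigma> * conjugate g (z (Suc k))) + (- \<sigma> *\<^sub>R (A *v q k)) \<bullet> (w - z (Suc k))"
    using prox_vi[OF kd comb_sc sc_nm, of "z k" _ "z (Suc k)" w] iter_step w edom_sc by blast
  moreover have "z (Suc k) \<in> edom (\<lambda>w. ereal \<sigma> * conjugate g w) \<Longrightarrow> real_of_ereal (ereal \<sigma> * conjugate g (z (Suc k))) = \<sigma> * cr (z (Suc k))"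
    using c_fin edom_sc by (metis real_of_ereal.simps(1) times_ereal.simps(1))
  moreover have "real_of_ereal (ereal \<sigma> * conjugate g w) = \<sigma> * cr w"
    using c_fin w by (metis real_of_ereal.simps(1) times_ereal.simps(1))
  ultimately show ?thesis using edom_sc by auto
qed

end

lemma young: fixes M a b al :: real assumes "al > 0"
  shows "M * a * b \<le> (al * a\<^sup>2 + M\<^sup>2 * b\<^sup>2 / al) / 2"
proof -
  have "0 \<le> (al * a - M * b)\<^sup>2" by simp
  then have "0 \<le> al\<^sup>2 * a\<^sup>2 - 2 * al * (M * a * b) + M\<^sup>2 * b\<^sup>2" by (simp add: power2_eq_square algebra_simps)
  then have 1: "2 * al * (M * a * b) \<le> al\<^sup>2 * a\<^sup>2 + M\<^sup>2 * b\<^sup>2" by linarith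
  have "M * a * b = (2 * al * (M * a * b)) / (2 * al)" using assms by simp
  also have "\<dots> \<le> (al\<^sup>2 * a\<^sup>2 + M\<^sup>2 * b\<^sup>2) / (2 * al)" using 1 assms by (intro divide_right_mono) auto
  also have "\<dots> = (al * a\<^sup>2 + M\<^sup>2 * b\<^sup>2 / al) / 2" using assms by (simp add: field_simps power2_eq_square)
  finally show ?thesis .
qed

context bcv begin

abbreviation "dx k \<equiv> bdist \<phi>p Gp (x (Suc k)) (x k)"
abbreviation "dz k \<equiv> bdist \<phi>d Gd (z (Suc k)) (z k)"

definition sg :: real where
  "sg = (if (\<forall>k. p k = z k \<and> q k = 2 *\<^sub>R x (Suc k) - x k) then 1 else -1)"

definition Phi where "Phi xs zs k = (z k - zs) \<bullet> (A *v (x k - xs))"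

definition V where
  "V xs zs k = bdist \<phi>p Gp xs (x k) / \<tau> + bdist \<phi>d Gd zs (z k) / \<sigma> - sg * Phi xs zs k"

lemma sg_abs: "\<bar>sg\<bar> = 1" unfolding sg_def by auto

lemma identE:
  "p k \<bullet> (A *v (xs - x (Suc k))) + zs \<bullet> (A *v (x (Suc k) - xs)) - (zs - z (Suc k)) \<bullet> (A *v q k)
    - (z (Suc k) - zs) \<bullet> (A *v xs)
   = sg * ((z (Suc k) - z k) \<bullet> (A *v (x (Suc k) - x k))) + sg * (Phi xs zs (Suc k) - Phi xs zs k)"
proof (cases "\<forall>k. p k = z k \<and> q k = 2 *\<^sub>R x (Suc k) - x k")
  case c: True
  then have s1: "sg = 1" unfolding sg_def by simp
  have pk: "p k = z k" and qk: "q k = 2 *\<^sub>R x (Suc k) - x k" using c by auto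
  show ?thesis unfolding Phi_def s1 pk qk
    by (simp add: inner_diff_left inner_diff_right matrix_vector_mult_diff_distrib matrix_vector_mult_scaleR
        inner_scaleR_right algebra_simps)
next
  case False
  then have c: "\<forall>k. p k = 2 *\<^sub>R z (Suc k) - z k \<and> q k = x k" using pq by blast
  have s1: "sg = -1" using False unfolding sg_def by simp
  have pk: "p k = 2 *\<^sub>R z (Suc k) - z k" and qk: "q k = x k" using c by auto
  show ?thesis unfolding Phi_def s1 pk qk
    by (simp add: inner_diff_left inner_diff_right matrix_vector_mult_diff_distrib matrix_vector_mult_scaleR
        inner_scaleR_left algebra_simps)
qed

end

context bcv begin

lemma issolD: assumes "issol xs zs"
  shows "xs \<in> edom \<phi>p" "zs \<in> edom \<phi>d" "xs \<in> edom h" "xs \<in> edom f" "zs \<in> edom (conjugate g)"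
    "\<And>y. y \<in> edom f \<Longrightarrow> fr xs + (- (transpose A *v zs) - gh xs) \<bullet> (y - xs) \<le> fr y"
    "\<And>w. w \<in> edom (conjugate g) \<Longrightarrow> cr zs + (A *v xs) \<bullet> (w - zs) \<le> cr w"
proof -
  have s: "xs \<in> edom \<phi>p" "zs \<in> edom \<phi>d" "xs \<in> edom h" "- (transpose A *v zs) - gh xs \<in> subdiff f xs"
    "A *v xs \<in> subdiff (conjugate g) zs" using assms unfolding issol_def by auto
  show "xs \<in> edom \<phi>p" "zs \<in> edom \<phi>d" "xs \<in> edom h" using s by auto
  have "\<bar>f xs\<bar> \<noteq> \<infinity>" using s(4) unfolding subdiff_def by auto
  then show "xs \<in> edom f" unfolding edom_def by (cases "f xs") auto
  have "\<bar>conjugate g zs\<bar> \<noteq> \<infinity>" using s(5) unfolding subdiff_def by auto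
  then show "zs \<in> edom (conjugate g)" unfolding edom_def by (cases "conjugate g zs") auto
  show "\<And>y. y \<in> edom f \<Longrightarrow> fr xs + (- (transpose A *v zs) - gh xs) \<bullet> (y - xs) \<le> fr y"
    using subdiff_ineq(3)[OF s(4) _ f_nm] by blast
  show "\<And>w. w \<in> edom (conjugate g) \<Longrightarrow> cr zs + (A *v xs) \<bullet> (w - zs) \<le> cr w"
    using subdiff_ineq(3)[OF s(5) _ c_nm] by blast
qed

lemma descent0:
  assumes sol: "issol xs zs"
  shows "V xs zs (Suc k) \<le> V xs zs k - dx k / \<tau> - dz k / \<sigma> + L * dx k
           + sg * ((z (Suc k) - z k) \<bullet> (A *v (x (Suc k) - x k)))"
proof -
  note S = issolD[OF sol]
  define x1 where "x1 = x (Suc k)"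
  define z1 where "z1 = z (Suc k)"
  have a: "x1 \<in> edom f" "dx k + bdist \<phi>p Gp xs x1 - bdist \<phi>p Gp xs (x k)
     \<le> \<tau> * fr xs - \<tau> * fr x1 + (\<tau> *\<^sub>R (transpose A *v p k) + \<tau> *\<^sub>R gh (x k)) \<bullet> (xs - x1)"
    using vi_x[OF S(1) S(4), of k] unfolding x1_def by auto
  have a2: "(\<tau> *\<^sub>R (transpose A *v p k) + \<tau> *\<^sub>R gh (x k)) \<bullet> (xs - x1)
     = \<tau> * (p k \<bullet> (A *v (xs - x1))) + \<tau> * (gh (x k) \<bullet> (xs - x k)) - \<tau> * (gh (x k) \<bullet> (x1 - x k))"
    by (simp add: inner_add_left dot_lmul_matrix inner_diff_right algebra_simps)
  have xkh: "x k \<in> edom h" "x1 \<in> edom h" using x_dom dom_sub unfolding x1_def by auto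
  have h1: "hr (x k) + gh (x k) \<bullet> (xs - x k) \<le> hr xs" using h_grad[OF xkh(1) S(3)] .
  have h2: "hr x1 - hr (x k) - gh (x k) \<bullet> (x1 - x k) \<le> L * dx k"
    using h_smooth x_dom x_int unfolding x1_def by blast
  have b: "z1 \<in> edom (conjugate g)" "dz k + bdist \<phi>d Gd zs z1 - bdist \<phi>d Gd zs (z k)
     \<le> \<sigma> * cr zs - \<sigma> * cr z1 + (- \<sigma> *\<^sub>R (A *v q k)) \<bullet> (zs - z1)"
    using vi_z[OF S(2) S(5), of k] unfolding z1_def by auto
  have b2: "(- \<sigma> *\<^sub>R (A *v q k)) \<bullet> (zs - z1) = - \<sigma> * ((zs - z1) \<bullet> (A *v q k))"
    by (simp add: inner_commute)
  have c: "fr xs + (- (transpose A *v zs) - gh xs) \<bullet> (x1 - xs) \<le> fr x1" using S(6)[OF a(1)] .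
  have c1: "(- (transpose A *v zs) - gh xs) \<bullet> (x1 - xs) = - (zs \<bullet> (A *v (x1 - xs))) - gh xs \<bullet> (x1 - xs)"
    by (simp add: inner_diff_left dot_lmul_matrix)
  have c2: "hr xs + gh xs \<bullet> (x1 - xs) \<le> hr x1" using h_grad[OF S(3) xkh(2)] .
  have c3: "cr zs + (A *v xs) \<bullet> (z1 - zs) \<le> cr z1" using S(7)[OF b(1)] .
  have c4: "(A *v xs) \<bullet> (z1 - zs) = (z1 - zs) \<bullet> (A *v xs)" by (simp add: inner_commute)
  have E: "p k \<bullet> (A *v (xs - x1)) + zs \<bullet> (A *v (x1 - xs)) - (zs - z1) \<bullet> (A *v q k)
    - (z1 - zs) \<bullet> (A *v xs)
   = sg * ((z1 - z k) \<bullet> (A *v (x1 - x k))) + sg * (Phi xs zs (Suc k) - Phi xs zs k)"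
    using identE unfolding x1_def z1_def .
  have A1: "(dx k + bdist \<phi>p Gp xs x1 - bdist \<phi>p Gp xs (x k)) / \<tau>
     \<le> fr xs - fr x1 + p k \<bullet> (A *v (xs - x1)) + gh (x k) \<bullet> (xs - x k) - gh (x k) \<bullet> (x1 - x k)"
    using a(2) a2 step(2) by (simp add: field_simps)
  have B1: "(dz k + bdist \<phi>d Gd zs z1 - bdist \<phi>d Gd zs (z k)) / \<sigma>
     \<le> cr zs - cr z1 - (zs - z1) \<bullet> (A *v q k)"
    using b(2) b2 step(1) by (simp add: field_simps)
  have "(dx k + bdist \<phi>p Gp xs x1 - bdist \<phi>p Gp xs (x k)) / \<tau> + (dz k + bdist \<phi>d Gd zs z1 - bdist \<phi>d Gd zs (z k)) / \<sigma>
     \<le> L * dx k + sg * ((z1 - z k) \<bullet> (A *v (x1 - x k))) + sg * (Phi xs zs (Suc k) - Phi xs zs k)"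
    using A1 B1 h1 h2 c c1 c2 c3 c4 E by linarith
  then show ?thesis unfolding V_def x1_def z1_def by (simp add: diff_divide_distrib add_divide_distrib algebra_simps)
qed

end

context bcv begin

definition gap where "gap = 1/\<tau> - L"
definition al where "al = (M\<^sup>2 * \<sigma> + gap) / 2"
definition dl where "dl = min (1/\<tau> - L - al) (1/\<sigma> - M\<^sup>2 / al)"
definition thh where "thh = (1 + M\<^sup>2 * \<sigma> * \<tau>) / 2"

lemma cst: "M\<^sup>2 * \<sigma> < 1/\<tau> - L" "al > 0" "dl > 0" "al < 1/\<tau> - L" "M\<^sup>2 / al < 1/\<sigma>"
  "thh < 1" "0 < thh" "M\<^sup>2 * \<sigma> * \<tau> \<le> thh\<^sup>2"
proof -
  have q: "M\<^sup>2 * \<sigma> * \<tau> < 1 - \<tau> * L" using step(3) by (simp add: algebra_simps)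
  then have "M\<^sup>2 * \<sigma> * \<tau> / \<tau> < (1 - \<tau> * L) / \<tau>" using step(2) by (intro divide_strict_right_mono) auto
  then show 1: "M\<^sup>2 * \<sigma> < 1/\<tau> - L" using step(2) by (simp add: field_simps)
  have m0: "0 \<le> M\<^sup>2 * \<sigma>" using step(1) by simp
  have "0 < M\<^sup>2 * \<sigma> + gap" using 1 m0 unfolding gap_def[symmetric] by linarith
  then show a0: "al > 0" unfolding al_def by simp
  show a1: "al < 1/\<tau> - L" unfolding al_def using 1 unfolding gap_def[symmetric] by (simp add: field_simps)
  have "M\<^sup>2 * \<sigma> < al" unfolding al_def using 1 unfolding gap_def[symmetric] by (simp add: field_simps)
  then have "M\<^sup>2 < al / \<sigma>" using step(1) by (simp add: field_simps)
  then have "M\<^sup>2 / al < 1 / \<sigma>" using a0 step(1) by (simp add: field_simps)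
  then show a2: "M\<^sup>2 / al < 1/\<sigma>" .
  show "dl > 0" unfolding dl_def using a1 a2 by simp
  have "0 < \<tau> * L" using L_pos step(2) by simp
  then have q1: "M\<^sup>2 * \<sigma> * \<tau> < 1" using q by linarith
  have q0: "0 \<le> M\<^sup>2 * \<sigma> * \<tau>" using step by simp
  show "thh < 1" "0 < thh" unfolding thh_def using q1 q0 by auto
  have "thh\<^sup>2 - M\<^sup>2 * \<sigma> * \<tau> = ((1 - M\<^sup>2 * \<sigma> * \<tau>) / 2)\<^sup>2" unfolding thh_def by (simp add: power2_eq_square field_simps)
  moreover have "0 \<le> ((1 - M\<^sup>2 * \<sigma> * \<tau>) / 2)\<^sup>2" by simp
  ultimately show "M\<^sup>2 * \<sigma> * \<tau> \<le> thh\<^sup>2" by linarith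
qed

lemma dx_ge: "(Np (x (Suc k) - x k))\<^sup>2 / 2 \<le> dx k" using dp_strong x_dom x_int by blast
lemma dz_ge: "(Nd (z (Suc k) - z k))\<^sup>2 / 2 \<le> dz k" using dd_strong z_dom z_int by blast
lemma dx_nn: "0 \<le> dx k"
proof -
  have "0 \<le> (Np (x (Suc k) - x k))\<^sup>2 / 2" by simp
  then show ?thesis using dx_ge[of k] by linarith
qed
lemma dz_nn: "0 \<le> dz k"
proof -
  have "0 \<le> (Nd (z (Suc k) - z k))\<^sup>2 / 2" by simp
  then show ?thesis using dz_ge[of k] by linarith
qed

lemma Np_nn: "0 \<le> Np v" using Np_norm unfolding is_norm_def by blast
lemma Nd_nn: "0 \<le> Nd v" using Nd_norm unfolding is_norm_def by blast

lemma bil_bound: "\<bar>sg * (w \<bullet> (A *v v))\<bar> \<le> M * Nd w * Np v"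
  using opnorm_bound[OF Np_norm Nd_norm, of w A v] sg_abs by (simp add: abs_mult)

lemma cross: "sg * ((z (Suc k) - z k) \<bullet> (A *v (x (Suc k) - x k))) \<le> al * dx k + M\<^sup>2 / al * dz k"
proof -
  define a where "a = Np (x (Suc k) - x k)"
  define b where "b = Nd (z (Suc k) - z k)"
  have "sg * ((z (Suc k) - z k) \<bullet> (A *v (x (Suc k) - x k))) \<le> M * a * b"
    using bil_bound[of "z (Suc k) - z k" "x (Suc k) - x k"] unfolding a_def b_def by (simp add: algebra_simps)
  also have "\<dots> \<le> (al * a\<^sup>2 + M\<^sup>2 * b\<^sup>2 / al) / 2" using young cst(2) by blast
  also have "\<dots> = al * (a\<^sup>2 / 2) + M\<^sup>2 / al * (b\<^sup>2 / 2)" by (simp add: field_simps)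
  also have "\<dots> \<le> al * dx k + M\<^sup>2 / al * dz k"
    using dx_ge[of k] dz_ge[of k] cst(2) unfolding a_def b_def
    by (intro add_mono mult_left_mono) auto
  finally show ?thesis .
qed

lemma descent:
  assumes "issol xs zs"
  shows "V xs zs (Suc k) \<le> V xs zs k - dl * (dx k + dz k)"
proof -
  have "V xs zs (Suc k) \<le> V xs zs k - (1/\<tau> - L - al) * dx k - (1/\<sigma> - M\<^sup>2 / al) * dz k"
    using descent0[OF assms, of k] cross[of k] by (simp add: algebra_simps)
  moreover have "dl * dx k \<le> (1/\<tau> - L - al) * dx k" unfolding dl_def using dx_nn
    by (intro mult_right_mono) auto
  moreover have "dl * dz k \<le> (1/\<sigma> - M\<^sup>2 / al) * dz k" unfolding dl_def using dz_nn
    by (intro mult_right_mono) auto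
  ultimately show ?thesis by (simp add: algebra_simps)
qed

lemma V_lower:
  assumes "issol xs zs"
  shows "(1 - thh) * (bdist \<phi>p Gp xs (x k) / \<tau> + bdist \<phi>d Gd zs (z k) / \<sigma>) \<le> V xs zs k"
proof -
  note S = issolD[OF assms]
  define a where "a = Np (xs - x k)"
  define b where "b = Nd (zs - z k)"
  define Dx where "Dx = bdist \<phi>p Gp xs (x k)"
  define Dz where "Dz = bdist \<phi>d Gd zs (z k)"
  have da: "a\<^sup>2 / 2 \<le> Dx" unfolding a_def Dx_def using dp_strong S(1) x_int by blast
  have db: "b\<^sup>2 / 2 \<le> Dz" unfolding b_def Dz_def using dd_strong S(2) z_int by blast
  have eq: "Phi xs zs k = (zs - z k) \<bullet> (A *v (xs - x k))" unfolding Phi_def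
    by (simp add: inner_diff_left inner_diff_right matrix_vector_mult_diff_distrib algebra_simps)
  have "sg * ((zs - z k) \<bullet> (A *v (xs - x k))) \<le> M * Nd (zs - z k) * Np (xs - x k)"
    using bil_bound[of "zs - z k" "xs - x k"] by linarith
  then have "sg * Phi xs zs k \<le> M * a * b"
    unfolding eq a_def b_def by (simp add: mult.commute mult.left_commute)
  also have "\<dots> \<le> (thh / \<tau> * a\<^sup>2 + M\<^sup>2 * b\<^sup>2 / (thh / \<tau>)) / 2" using young[of "thh / \<tau>" M a b] cst(7) step(2) by simp
  also have "\<dots> = thh / \<tau> * (a\<^sup>2 / 2) + (M\<^sup>2 * \<tau> / thh) * (b\<^sup>2 / 2)" by (simp add: field_simps)
  also have "\<dots> \<le> thh / \<tau> * Dx + (thh / \<sigma>) * Dz"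
  proof -
    have t0: "0 \<le> thh / \<tau>" using cst(7) step(2) by simp
    have 1: "thh / \<tau> * (a\<^sup>2 / 2) \<le> thh / \<tau> * Dx" using da t0 by (rule mult_left_mono)
    have "M\<^sup>2 * \<sigma> * \<tau> \<le> thh * thh" using cst(8) by (simp add: power2_eq_square)
    then have "M\<^sup>2 * \<tau> / thh \<le> thh / \<sigma>" using cst(7) step(1) by (simp add: field_simps)
    then have 2: "M\<^sup>2 * \<tau> / thh * (b\<^sup>2 / 2) \<le> thh / \<sigma> * (b\<^sup>2 / 2)"
      by (rule mult_right_mono) simp
    have 3: "thh / \<sigma> * (b\<^sup>2 / 2) \<le> thh / \<sigma> * Dz" using db cst(7) step(1) by (intro mult_left_mono) auto
    show ?thesis using 1 2 3 by linarith
  qed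
  finally have 4: "sg * Phi xs zs k \<le> thh / \<tau> * Dx + thh / \<sigma> * Dz" .
  have 5: "thh / \<tau> * Dx + thh / \<sigma> * Dz = thh * (Dx / \<tau> + Dz / \<sigma>)" by (simp add: distrib_left)
  have 6: "(1 - thh) * (Dx / \<tau> + Dz / \<sigma>) = (Dx / \<tau> + Dz / \<sigma>) - thh * (Dx / \<tau> + Dz / \<sigma>)"
    by (simp add: left_diff_distrib)
  have "V xs zs k = Dx / \<tau> + Dz / \<sigma> - sg * Phi xs zs k" unfolding V_def Dx_def Dz_def by simp
  then show ?thesis unfolding Dx_def[symmetric] Dz_def[symmetric] using 4 5 6 by linarith
qed

end

lemma bdist_cont:
  assumes k: "bkernel \<phi> G" and y0: "y0 \<in> interior (edom \<phi>)" and s: "s \<longlonglongrightarrow> y0"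
  shows "(\<lambda>k. bdist \<phi> G u (s k)) \<longlonglongrightarrow> bdist \<phi> G u y0"
proof -
  have d: "((\<lambda>w. real_of_ereal (\<phi> w)) has_derivative (\<lambda>d. G y0 \<bullet> d)) (at y0)"
    using k y0 unfolding bkernel_def by blast
  have c1: "isCont (\<lambda>w. real_of_ereal (\<phi> w)) y0" using has_derivative_continuous[OF d] .
  have "continuous_on (interior (edom \<phi>)) G" using k unfolding bkernel_def by blast
  then have c2: "isCont G y0" using y0 by (simp add: continuous_on_eq_continuous_at)
  define R where "R = (\<lambda>w. real_of_ereal (\<phi> w))"
  have r1: "(\<lambda>k. R (s k)) \<longlonglongrightarrow> R y0" using isCont_tendsto_compose[OF c1 s] unfolding R_def .
  have r2: "(\<lambda>k. G (s k)) \<longlonglongrightarrow> G y0" using isCont_tendsto_compose[OF c2 s] .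
  have eq: "\<And>y. bdist \<phi> G u y = R u - R y - G y \<bullet> (u - y)" unfolding bdist_def R_def by simp
  show ?thesis unfolding eq by (intro tendsto_intros r1 r2 s)
qed

context bcv begin

lemma V_nonneg: assumes "issol xs zs" shows "0 \<le> V xs zs k"
proof -
  note S = issolD[OF assms]
  have "0 \<le> (Np (xs - x k))\<^sup>2 / 2" by simp
  moreover have "(Np (xs - x k))\<^sup>2 / 2 \<le> bdist \<phi>p Gp xs (x k)" using dp_strong S(1) x_int by blast
  ultimately have a: "0 \<le> bdist \<phi>p Gp xs (x k)" by linarith
  have "0 \<le> (Nd (zs - z k))\<^sup>2 / 2" by simp
  moreover have "(Nd (zs - z k))\<^sup>2 / 2 \<le> bdist \<phi>d Gd zs (z k)" using dd_strong S(2) z_int by blast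
  ultimately have b: "0 \<le> bdist \<phi>d Gd zs (z k)" by linarith
  have "0 \<le> (1 - thh) * (bdist \<phi>p Gp xs (x k) / \<tau> + bdist \<phi>d Gd zs (z k) / \<sigma>)"
    using a b cst(6) step(1,2) by (intro mult_nonneg_nonneg add_nonneg_nonneg divide_nonneg_pos) auto
  then show ?thesis using V_lower[OF assms, of k] by linarith
qed

lemma V_dec: assumes "issol xs zs" shows "V xs zs (Suc k) \<le> V xs zs k"
proof -
  have "0 \<le> dl * (dx k + dz k)" using cst(3) dx_nn dz_nn by simp
  then show ?thesis using descent[OF assms, of k] by linarith
qed

lemma V_decseq: assumes "issol xs zs" shows "decseq (V xs zs)"
  using V_dec[OF assms] by (simp add: decseq_SucI)

lemma partial: assumes "issol xs zs" shows "dl * (\<Sum>k<n. dx k + dz k) \<le> V xs zs 0 - V xs zs n"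
proof (induction n)
  case 0 then show ?case by simp
next
  case (Suc n)
  have "dl * (\<Sum>k<Suc n. dx k + dz k) = dl * (\<Sum>k<n. dx k + dz k) + dl * (dx n + dz n)"
    by (simp add: distrib_left)
  then show ?case using descent[OF assms, of n] Suc by linarith
qed

lemma d_lim: "dx \<longlonglongrightarrow> 0" "dz \<longlonglongrightarrow> 0"
proof -
  obtain xs zs where s: "issol xs zs" using sol_ex by blast
  have "summable (\<lambda>k. dx k + dz k)"
  proof (rule summableI_nonneg_bounded)
    show "0 \<le> dx k + dz k" for k using dx_nn dz_nn by (simp add: add_nonneg_nonneg)
    show "(\<Sum>k<n. dx k + dz k) \<le> V xs zs 0 / dl" for n
    proof -
      have "dl * (\<Sum>k<n. dx k + dz k) \<le> V xs zs 0" using partial[OF s, of n] V_nonneg[OF s, of n] by linarith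
      moreover have "(\<Sum>k<n. dx k + dz k) * dl = dl * (\<Sum>k<n. dx k + dz k)" by (rule mult.commute)
      ultimately show ?thesis unfolding pos_le_divide_eq[OF cst(3)] by linarith
    qed
  qed
  then have l: "(\<lambda>k. dx k + dz k) \<longlonglongrightarrow> 0" by (rule summable_LIMSEQ_zero)
  have e1: "\<forall>\<^sub>F k in sequentially. 0 \<le> dx k" "\<forall>\<^sub>F k in sequentially. 0 \<le> dz k"
    using dx_nn dz_nn by simp_all
  have e2: "\<forall>\<^sub>F k in sequentially. dx k \<le> dx k + dz k" "\<forall>\<^sub>F k in sequentially. dz k \<le> dx k + dz k"
    using dx_nn dz_nn by simp_all
  show "dx \<longlonglongrightarrow> 0" using tendsto_sandwich[OF e1(1) e2(1) tendsto_const l] .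
  show "dz \<longlonglongrightarrow> 0" using tendsto_sandwich[OF e1(2) e2(2) tendsto_const l] .
qed

lemma norm_from_N:
  assumes "is_norm N" "\<And>k. (N (v k))\<^sup>2 / 2 \<le> e k" "e \<longlonglongrightarrow> 0"
  shows "v \<longlonglongrightarrow> (0 :: 'a::euclidean_space)"
proof -
  obtain c where c: "c > 0" "\<And>w. c * norm w \<le> N w" using is_norm_lower[OF assms(1)] by blast
  have b: "norm (v k) \<le> sqrt (2 * e k) / c" for k
  proof -
    have "(N (v k))\<^sup>2 \<le> 2 * e k" using assms(2)[of k] by linarith
    then have "N (v k) \<le> sqrt (2 * e k)" by (rule real_le_rsqrt)
    then have "c * norm (v k) \<le> sqrt (2 * e k)" using c(2)[of "v k"] by linarith
    moreover have "norm (v k) * c = c * norm (v k)" by (rule mult.commute)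
    ultimately show ?thesis unfolding pos_le_divide_eq[OF c(1)] by linarith
  qed
  have t1: "(\<lambda>k. 2 * e k) \<longlonglongrightarrow> 2 * 0" by (rule tendsto_mult[OF tendsto_const assms(3)])
  have t2: "(\<lambda>k. sqrt (2 * e k)) \<longlonglongrightarrow> sqrt (2 * 0)" by (rule tendsto_real_sqrt[OF t1])
  have t3: "(\<lambda>k. sqrt (2 * e k) / c) \<longlonglongrightarrow> sqrt (2 * 0) / c" using tendsto_divide[OF t2 tendsto_const, of c] c(1) by simp
  then have t4: "(\<lambda>k. sqrt (2 * e k) / c) \<longlonglongrightarrow> 0" by simp
  have ev: "\<forall>\<^sub>F k in sequentially. norm (v k) \<le> sqrt (2 * e k) / c" using b by simp
  show ?thesis using Lim_null_comparison[OF ev t4] .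
qed

lemma xdiff: "(\<lambda>k. x (Suc k) - x k) \<longlonglongrightarrow> 0"
  using norm_from_N[OF Np_norm dx_ge d_lim(1)] .
lemma zdiff: "(\<lambda>k. z (Suc k) - z k) \<longlonglongrightarrow> 0"
  using norm_from_N[OF Nd_norm dz_ge d_lim(2)] .

end

lemma bounded_from_N:
  assumes "is_norm N" "\<And>k. (N (a - v k))\<^sup>2 / 2 \<le> B"
  shows "bounded (range (v :: nat \<Rightarrow> 'a::euclidean_space))"
proof -
  obtain c where c: "c > 0" "\<And>w. c * norm w \<le> N w" using is_norm_lower[OF assms(1)] by blast
  have b: "norm (v k) \<le> norm a + sqrt (2 * B) / c" for k
  proof -
    have "(N (a - v k))\<^sup>2 \<le> 2 * B" using assms(2)[of k] by linarith
    then have "N (a - v k) \<le> sqrt (2 * B)" by (rule real_le_rsqrt)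
    then have "c * norm (a - v k) \<le> sqrt (2 * B)" using c(2)[of "a - v k"] by linarith
    moreover have "norm (a - v k) * c = c * norm (a - v k)" by (rule mult.commute)
    ultimately have "norm (a - v k) \<le> sqrt (2 * B) / c" unfolding pos_le_divide_eq[OF c(1)] by linarith
    moreover have "norm (v k) \<le> norm a + norm (a - v k)"
      using norm_triangle_ineq4[of a "a - v k"] by simp
    ultimately show ?thesis by linarith
  qed
  show ?thesis unfolding bounded_iff using b by blast
qed

context bcv begin

definition xs0 where "xs0 = (SOME xs. \<exists>zs. issol xs zs)"
definition zs0 where "zs0 = (SOME zs. issol xs0 zs)"

lemma sol0: "issol xs0 zs0"
proof -
  have "\<exists>zs. issol xs0 zs" unfolding xs0_def using someI_ex[OF sol_ex] .
  then show ?thesis unfolding zs0_def by (rule someI_ex)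
qed

definition Bx where "Bx = \<tau> * V xs0 zs0 0 / (1 - thh)"
definition Bz where "Bz = \<sigma> * V xs0 zs0 0 / (1 - thh)"

lemma D_bounds_gen:
  assumes s: "issol xs zs"
  shows "bdist \<phi>p Gp xs (x k) \<le> \<tau> * V xs zs k / (1 - thh)" "bdist \<phi>d Gd zs (z k) \<le> \<sigma> * V xs zs k / (1 - thh)"
proof -
  note S = issolD[OF s]
  have "0 \<le> (Np (xs - x k))\<^sup>2 / 2" by simp
  moreover have "(Np (xs - x k))\<^sup>2 / 2 \<le> bdist \<phi>p Gp xs (x k)" using dp_strong S(1) x_int by blast
  ultimately have a: "0 \<le> bdist \<phi>p Gp xs (x k)" by linarith
  have "0 \<le> (Nd (zs - z k))\<^sup>2 / 2" by simp
  moreover have "(Nd (zs - z k))\<^sup>2 / 2 \<le> bdist \<phi>d Gd zs (z k)" using dd_strong S(2) z_int by blast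
  ultimately have b: "0 \<le> bdist \<phi>d Gd zs (z k)" by linarith
  have th: "0 < 1 - thh" using cst(6) by simp
  have V: "(1 - thh) * (bdist \<phi>p Gp xs (x k) / \<tau> + bdist \<phi>d Gd zs (z k) / \<sigma>) \<le> V xs zs k"
    using V_lower[OF s, of k] .
  define P where "P = bdist \<phi>p Gp xs (x k) / \<tau>"
  define Q where "Q = bdist \<phi>d Gd zs (z k) / \<sigma>"
  have P0: "0 \<le> P" "0 \<le> Q" unfolding P_def Q_def using a b step(1,2) by simp_all
  have V': "(1 - thh) * P + (1 - thh) * Q \<le> V xs zs k" using V unfolding P_def[symmetric] Q_def[symmetric]
    by (simp add: distrib_left)
  have n1: "0 \<le> (1 - thh) * P" "0 \<le> (1 - thh) * Q" using P0 th by simp_all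
  have 1: "P * (1 - thh) \<le> V xs zs k" using V' n1 by (simp add: mult.commute)
  have 2: "Q * (1 - thh) \<le> V xs zs k" using V' n1 by (simp add: mult.commute)
  have 1: "P \<le> V xs zs k / (1 - thh)" using 1 unfolding pos_le_divide_eq[OF th] .
  have 2: "Q \<le> V xs zs k / (1 - thh)" using 2 unfolding pos_le_divide_eq[OF th] .
  have "bdist \<phi>p Gp xs (x k) \<le> V xs zs k / (1 - thh) * \<tau>" using 1 unfolding P_def pos_divide_le_eq[OF step(2)] .
  then show "bdist \<phi>p Gp xs (x k) \<le> \<tau> * V xs zs k / (1 - thh)" by (simp add: mult.commute)
  have "bdist \<phi>d Gd zs (z k) \<le> V xs zs k / (1 - thh) * \<sigma>" using 2 unfolding Q_def pos_divide_le_eq[OF step(1)] .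
  then show "bdist \<phi>d Gd zs (z k) \<le> \<sigma> * V xs zs k / (1 - thh)" by (simp add: mult.commute)
qed

lemma V_mono_le: assumes "issol xs zs" "j \<le> k" shows "V xs zs k \<le> V xs zs j"
  using V_decseq[OF assms(1)] assms(2) unfolding decseq_def by blast

lemma Dx_B: "bdist \<phi>p Gp xs0 (x k) \<le> Bx"
proof -
  have "V xs0 zs0 k \<le> V xs0 zs0 0" using V_mono_le[OF sol0] by simp
  then have "\<tau> * V xs0 zs0 k / (1 - thh) \<le> Bx" unfolding Bx_def using step(2) cst(6)
    by (intro divide_right_mono mult_left_mono) auto
  then show ?thesis using D_bounds_gen(1)[OF sol0, of k] by linarith
qed

lemma Dz_B: "bdist \<phi>d Gd zs0 (z k) \<le> Bz"
proof -
  have "V xs0 zs0 k \<le> V xs0 zs0 0" using V_mono_le[OF sol0] by simp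
  then have "\<sigma> * V xs0 zs0 k / (1 - thh) \<le> Bz" unfolding Bz_def using step(1) cst(6)
    by (intro divide_right_mono mult_left_mono) auto
  then show ?thesis using D_bounds_gen(2)[OF sol0, of k] by linarith
qed

lemma bnd_xz: "bounded (range (\<lambda>k. (x k, z k)))"
proof -
  note S = issolD[OF sol0]
  have "bounded (range x)"
  proof (rule bounded_from_N[OF Np_norm])
    fix k have "(Np (xs0 - x k))\<^sup>2 / 2 \<le> bdist \<phi>p Gp xs0 (x k)" using dp_strong S(1) x_int by blast
    then show "(Np (xs0 - x k))\<^sup>2 / 2 \<le> Bx" using Dx_B[of k] by linarith
  qed
  moreover have "bounded (range z)"
  proof (rule bounded_from_N[OF Nd_norm])
    fix k have "(Nd (zs0 - z k))\<^sup>2 / 2 \<le> bdist \<phi>d Gd zs0 (z k)" using dd_strong S(2) z_int by blast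
    then show "(Nd (zs0 - z k))\<^sup>2 / 2 \<le> Bz" using Dz_B[of k] by linarith
  qed
  ultimately have "bounded (range x \<times> range z)" by (rule bounded_Times)
  moreover have "range (\<lambda>k. (x k, z k)) \<subseteq> range x \<times> range z" by auto
  ultimately show ?thesis by (rule bounded_subset)
qed

lemma step_x:
  assumes u: "u \<in> edom \<phi>p" "u \<in> edom f"
  shows "x (Suc k) \<in> edom f \<and> fr (x (Suc k)) \<le> fr u + hr u - hr (x (Suc k)) + p k \<bullet> (A *v (u - x (Suc k)))
            + L * dx k + (bdist \<phi>p Gp u (x k) - bdist \<phi>p Gp u (x (Suc k))) / \<tau>"
proof -
  define x1 where "x1 = x (Suc k)"
  have a: "x1 \<in> edom f" "dx k + bdist \<phi>p Gp u x1 - bdist \<phi>p Gp u (x k)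
     \<le> \<tau> * fr u - \<tau> * fr x1 + (\<tau> *\<^sub>R (transpose A *v p k) + \<tau> *\<^sub>R gh (x k)) \<bullet> (u - x1)"
    using vi_x[OF u, of k] unfolding x1_def by auto
  have a2: "(\<tau> *\<^sub>R (transpose A *v p k) + \<tau> *\<^sub>R gh (x k)) \<bullet> (u - x1)
     = \<tau> * (p k \<bullet> (A *v (u - x1))) + \<tau> * (gh (x k) \<bullet> (u - x k)) - \<tau> * (gh (x k) \<bullet> (x1 - x k))"
    by (simp add: inner_add_left dot_lmul_matrix inner_diff_right algebra_simps)
  have xkh: "x k \<in> edom h" "u \<in> edom h" using x_dom dom_sub u by auto
  have h1: "hr (x k) + gh (x k) \<bullet> (u - x k) \<le> hr u" using h_grad[OF xkh(1) xkh(2)] .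
  have h2: "hr x1 - hr (x k) - gh (x k) \<bullet> (x1 - x k) \<le> L * dx k"
    using h_smooth x_dom x_int unfolding x1_def by blast
  have "(dx k + bdist \<phi>p Gp u x1 - bdist \<phi>p Gp u (x k)) / \<tau>
     \<le> fr u - fr x1 + p k \<bullet> (A *v (u - x1)) + gh (x k) \<bullet> (u - x k) - gh (x k) \<bullet> (x1 - x k)"
    using a(2) a2 step(2) by (simp add: field_simps)
  moreover have "(dx k + bdist \<phi>p Gp u x1 - bdist \<phi>p Gp u (x k)) / \<tau>
      = dx k / \<tau> - (bdist \<phi>p Gp u (x k) - bdist \<phi>p Gp u x1) / \<tau>" by (simp add: diff_divide_distrib add_divide_distrib)
  moreover have "0 \<le> dx k / \<tau>" using dx_nn step(2) by simp
  ultimately show ?thesis using h1 h2 a(1) unfolding x1_def by linarith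
qed

lemma step_z:
  assumes w: "w \<in> edom \<phi>d" "w \<in> edom (conjugate g)"
  shows "z (Suc k) \<in> edom (conjugate g) \<and> cr (z (Suc k)) \<le> cr w - (w - z (Suc k)) \<bullet> (A *v q k)
            + (bdist \<phi>d Gd w (z k) - bdist \<phi>d Gd w (z (Suc k))) / \<sigma>"
proof -
  define z1 where "z1 = z (Suc k)"
  have b: "z1 \<in> edom (conjugate g)" "dz k + bdist \<phi>d Gd w z1 - bdist \<phi>d Gd w (z k)
     \<le> \<sigma> * cr w - \<sigma> * cr z1 + (- \<sigma> *\<^sub>R (A *v q k)) \<bullet> (w - z1)"
    using vi_z[OF w, of k] unfolding z1_def by auto
  have b2: "(- \<sigma> *\<^sub>R (A *v q k)) \<bullet> (w - z1) = - \<sigma> * ((w - z1) \<bullet> (A *v q k))"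
    by (simp add: inner_commute)
  have "(dz k + bdist \<phi>d Gd w z1 - bdist \<phi>d Gd w (z k)) / \<sigma>
     \<le> cr w - cr z1 - (w - z1) \<bullet> (A *v q k)"
    using b(2) b2 step(1) by (simp add: field_simps)
  moreover have "(dz k + bdist \<phi>d Gd w z1 - bdist \<phi>d Gd w (z k)) / \<sigma>
      = dz k / \<sigma> - (bdist \<phi>d Gd w (z k) - bdist \<phi>d Gd w z1) / \<sigma>" by (simp add: diff_divide_distrib add_divide_distrib)
  moreover have "0 \<le> dz k / \<sigma>" using dz_nn step(1) by simp
  ultimately show ?thesis using b(1) unfolding z1_def by linarith
qed

end

context bcv begin

definition clus where
  "clus r xh zh \<longleftrightarrow> strict_mono r \<and> (x \<circ> r) \<longlonglongrightarrow> xh \<and> (z \<circ> r) \<longlonglongrightarrow> zh"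

lemma clus_ex: "\<exists>r xh zh. clus r xh zh"
proof -
  obtain l r where r: "strict_mono r" "((\<lambda>k. (x k, z k)) \<circ> r) \<longlonglongrightarrow> l"
    using bounded_imp_convergent_subsequence[OF bnd_xz] by blast
  have "(x \<circ> r) \<longlonglongrightarrow> fst l" using tendsto_fst[OF r(2)] by (simp add: o_def)
  moreover have "(z \<circ> r) \<longlonglongrightarrow> snd l" using tendsto_snd[OF r(2)] by (simp add: o_def)
  ultimately show ?thesis using r(1) unfolding clus_def by blast
qed

context
  fixes r xh zh assumes cl: "clus r xh zh"
begin

lemma cl_r: "strict_mono r" using cl unfolding clus_def by blast
lemma cl_x: "(\<lambda>j. x (r j)) \<longlonglongrightarrow> xh" using cl unfolding clus_def by (simp add: o_def)
lemma cl_z: "(\<lambda>j. z (r j)) \<longlonglongrightarrow> zh" using cl unfolding clus_def by (simp add: o_def)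

lemma cl_x1: "(\<lambda>j. x (Suc (r j))) \<longlonglongrightarrow> xh"
proof -
  have "(\<lambda>j. x (Suc (r j)) - x (r j)) \<longlonglongrightarrow> 0" using LIMSEQ_subseq_LIMSEQ[OF xdiff cl_r] by (simp add: o_def)
  from tendsto_add[OF cl_x this] show ?thesis by simp
qed

lemma cl_z1: "(\<lambda>j. z (Suc (r j))) \<longlonglongrightarrow> zh"
proof -
  have "(\<lambda>j. z (Suc (r j)) - z (r j)) \<longlonglongrightarrow> 0" using LIMSEQ_subseq_LIMSEQ[OF zdiff cl_r] by (simp add: o_def)
  from tendsto_add[OF cl_z this] show ?thesis by simp
qed

lemma cl_pq: "(\<lambda>j. p (r j)) \<longlonglongrightarrow> zh" "(\<lambda>j. q (r j)) \<longlonglongrightarrow> xh"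
proof -
  have "(\<lambda>j. p (r j)) \<longlonglongrightarrow> zh \<and> (\<lambda>j. q (r j)) \<longlonglongrightarrow> xh"
    using pq
  proof
    assume c: "\<forall>k. p k = z k \<and> q k = 2 *\<^sub>R x (Suc k) - x k"
    have "(\<lambda>j. 2 *\<^sub>R x (Suc (r j)) - x (r j)) \<longlonglongrightarrow> 2 *\<^sub>R xh - xh"
      by (intro tendsto_intros cl_x1 cl_x)
    then show ?thesis using c cl_z by (simp add: scaleR_2)
  next
    assume c: "\<forall>k. p k = 2 *\<^sub>R z (Suc k) - z k \<and> q k = x k"
    have "(\<lambda>j. 2 *\<^sub>R z (Suc (r j)) - z (r j)) \<longlonglongrightarrow> 2 *\<^sub>R zh - zh"
      by (intro tendsto_intros cl_z1 cl_z)
    then show ?thesis using c cl_x by (simp add: scaleR_2)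
  qed
  then show "(\<lambda>j. p (r j)) \<longlonglongrightarrow> zh" "(\<lambda>j. q (r j)) \<longlonglongrightarrow> xh" by auto
qed

lemma xh_int: "xh \<in> interior (edom \<phi>p)"
proof -
  have c: "closed {y' \<in> interior (edom \<phi>p). bdist \<phi>p Gp xs0 y' \<le> Bx}"
    using closed_dp issolD(1)[OF sol0] by blast
  have "\<And>j. x (r j) \<in> {y' \<in> interior (edom \<phi>p). bdist \<phi>p Gp xs0 y' \<le> Bx}" using x_int Dx_B by blast
  from closed_sequentially[OF c this cl_x] show ?thesis by blast
qed

lemma zh_int: "zh \<in> interior (edom \<phi>d)"
proof -
  have c: "closed {w' \<in> interior (edom \<phi>d). bdist \<phi>d Gd zs0 w' \<le> Bz}"
    using closed_dd issolD(2)[OF sol0] by blast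
  have "\<And>j. z (r j) \<in> {w' \<in> interior (edom \<phi>d). bdist \<phi>d Gd zs0 w' \<le> Bz}" using z_int Dz_B by blast
  from closed_sequentially[OF c this cl_z] show ?thesis by blast
qed

lemma xh_h: "xh \<in> edom h" using xh_int interior_subset dom_sub by blast

lemma lim_x:
  assumes u: "u \<in> edom \<phi>p" "u \<in> edom f"
  shows "f xh \<le> ereal (fr u + hr u - hr xh + zh \<bullet> (A *v (u - xh)))"
proof -
  define c where "c = (\<lambda>j. fr u + hr u - hr (x (Suc (r j))) + p (r j) \<bullet> (A *v (u - x (Suc (r j))))
            + L * dx (r j) + (bdist \<phi>p Gp u (x (r j)) - bdist \<phi>p Gp u (x (Suc (r j)))) / \<tau>)"
  have der: "((\<lambda>w. hr w) has_derivative (\<lambda>d. gh xh \<bullet> d)) (at xh)" using h_diff xh_h by blast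
  have hc: "isCont (\<lambda>w. hr w) xh" using has_derivative_continuous[OF der] .
  have t1: "(\<lambda>j. hr (x (Suc (r j)))) \<longlonglongrightarrow> hr xh" using isCont_tendsto_compose[OF hc cl_x1] .
  have t2: "(\<lambda>j. dx (r j)) \<longlonglongrightarrow> 0" using LIMSEQ_subseq_LIMSEQ[OF d_lim(1) cl_r] by (simp add: o_def)
  have t3: "(\<lambda>j. bdist \<phi>p Gp u (x (r j))) \<longlonglongrightarrow> bdist \<phi>p Gp u xh" using bdist_cont[OF kp xh_int cl_x] .
  have t4: "(\<lambda>j. bdist \<phi>p Gp u (x (Suc (r j)))) \<longlonglongrightarrow> bdist \<phi>p Gp u xh" using bdist_cont[OF kp xh_int cl_x1] .
  have "c \<longlonglongrightarrow> fr u + hr u - hr xh + zh \<bullet> (A *v (u - xh)) + L * 0 + (bdist \<phi>p Gp u xh - bdist \<phi>p Gp u xh) / \<tau>"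
    unfolding c_def using step(2)
    by (intro t1 t2 t3 t4 cl_pq cl_x1 tendsto_intros bounded_linear.tendsto[OF matrix_vector_mul_bounded_linear]) auto
  then have tc: "c \<longlonglongrightarrow> fr u + hr u - hr xh + zh \<bullet> (A *v (u - xh))" by simp
  have "\<And>j. (x (Suc (r j)), c j) \<in> eepigraph f"
  proof -
    fix j
    have s: "x (Suc (r j)) \<in> edom f \<and> fr (x (Suc (r j))) \<le> c j" using step_x[OF u, of "r j"] unfolding c_def by blast
    then have eq: "f (x (Suc (r j))) = ereal (fr (x (Suc (r j))))" using f_fin by blast
    have "f (x (Suc (r j))) \<le> ereal (c j)" by (subst eq) (use s in simp)
    then show "(x (Suc (r j)), c j) \<in> eepigraph f" unfolding eepigraph_def by simp
  qed
  from closed_sequentially[OF f_cc(1)[unfolded eclosed_def] this tendsto_Pair[OF cl_x1 tc]]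
  show ?thesis unfolding eepigraph_def by simp
qed

lemma lim_z:
  assumes w: "w \<in> edom \<phi>d" "w \<in> edom (conjugate g)"
  shows "conjugate g zh \<le> ereal (cr w - (w - zh) \<bullet> (A *v xh))"
proof -
  define e where "e = (\<lambda>j. cr w - (w - z (Suc (r j))) \<bullet> (A *v q (r j))
            + (bdist \<phi>d Gd w (z (r j)) - bdist \<phi>d Gd w (z (Suc (r j)))) / \<sigma>)"
  have t3: "(\<lambda>j. bdist \<phi>d Gd w (z (r j))) \<longlonglongrightarrow> bdist \<phi>d Gd w zh" using bdist_cont[OF kd zh_int cl_z] .
  have t4: "(\<lambda>j. bdist \<phi>d Gd w (z (Suc (r j)))) \<longlonglongrightarrow> bdist \<phi>d Gd w zh" using bdist_cont[OF kd zh_int cl_z1] .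
  have "e \<longlonglongrightarrow> cr w - (w - zh) \<bullet> (A *v xh) + (bdist \<phi>d Gd w zh - bdist \<phi>d Gd w zh) / \<sigma>"
    unfolding e_def using step(1)
    by (intro t3 t4 cl_pq cl_z1 tendsto_intros bounded_linear.tendsto[OF matrix_vector_mul_bounded_linear]) auto
  then have te: "e \<longlonglongrightarrow> cr w - (w - zh) \<bullet> (A *v xh)" by simp
  have le: "conjugate g (z (Suc (r j))) \<le> ereal (e j)" for j
  proof -
    have s: "z (Suc (r j)) \<in> edom (conjugate g) \<and> cr (z (Suc (r j))) \<le> e j"
      using step_z[OF w, of "r j"] unfolding e_def by blast
    then have eq: "conjugate g (z (Suc (r j))) = ereal (cr (z (Suc (r j))))" using c_fin by blast
    show ?thesis by (subst eq) (use s in simp)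
  qed
  show ?thesis by (rule conj_lsc[OF g_nm cl_z1 le te])
qed

lemma xh_f: "xh \<in> edom f"
proof -
  note S = issolD[OF sol0]
  have "f xh \<le> ereal (fr xs0 + hr xs0 - hr xh + zh \<bullet> (A *v (xs0 - xh)))" using lim_x[OF S(1) S(4)] .
  then show ?thesis unfolding edom_def using le_less_trans by fastforce
qed

lemma zh_c: "zh \<in> edom (conjugate g)"
proof -
  note S = issolD[OF sol0]
  have "conjugate g zh \<le> ereal (cr zs0 - (zs0 - zh) \<bullet> (A *v xh))" using lim_z[OF S(2) S(5)] .
  then show ?thesis unfolding edom_def using le_less_trans by fastforce
qed

lemma small_t:
  fixes e n :: real assumes "e > 0" "n \<ge> 0"
  shows "min 1 (e / (n + 1)) > 0" "\<And>t. 0 < t \<Longrightarrow> t \<le> min 1 (e / (n + 1)) \<Longrightarrow> t * n < e"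
proof -
  show "min 1 (e / (n + 1)) > 0" using assms by simp
  fix t assume t: "0 < t" "t \<le> min 1 (e / (n + 1))"
  have "t * n \<le> e / (n + 1) * n" using t assms(2) by (intro mult_right_mono) auto
  also have "\<dots> < e" using assms by (simp add: field_simps)
  finally show "t * n < e" .
qed

lemma xh_sub: "- (transpose A *v zh) - gh xh \<in> subdiff f xh"
proof -
  have fx: "f xh = ereal (fr xh)" using f_fin[OF xh_f] .
  obtain ep where ep: "ep > 0" "ball xh ep \<subseteq> interior (edom \<phi>p)"
    using open_contains_ball_eq[OF open_interior] xh_int by blast
  have main: "fr xh + (- (transpose A *v zh) - gh xh) \<bullet> (y - xh) \<le> fr y" if y: "y \<in> edom f" for y
  proof -
    define n where "n = norm (y - xh)"
    define t0 where "t0 = min 1 (ep / (n + 1))"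
    have t0: "t0 > 0" "\<And>t. 0 < t \<Longrightarrow> t \<le> t0 \<Longrightarrow> t * n < ep"
      using small_t[OF ep(1), of n] unfolding t0_def n_def by auto
    define C where "C = fr y - fr xh + zh \<bullet> (A *v (y - xh))"
    have key: "- C \<le> (hr (xh + t *\<^sub>R (y - xh)) - hr xh) / t" if t: "0 < t" "t \<le> t0" for t
    proof -
      define yt where "yt = xh + t *\<^sub>R (y - xh)"
      have yt: "yt = (1-t) *\<^sub>R xh + t *\<^sub>R y" unfolding yt_def by (simp add: algebra_simps)
      have "dist xh yt = t * n" unfolding yt_def n_def dist_norm using t by simp
      then have "yt \<in> ball xh ep" using t0(2)[OF t] by simp
      then have ytp: "yt \<in> edom \<phi>p" using ep(2) interior_subset by blast
      have t1: "t \<le> 1" using t unfolding t0_def by simp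
      have cmb: "yt \<in> edom f" "f yt \<le> ereal ((1-t) * fr xh + t * fr y)"
        unfolding yt using econvex_comb[OF f_cc(2) f_nm xh_f y] t t1 by auto
      have fyt: "fr yt \<le> (1-t) * fr xh + t * fr y"
      proof -
        have eq: "f yt = ereal (fr yt)" using f_fin[OF cmb(1)] .
        show ?thesis using cmb(2) by (subst (asm) eq) simp
      qed
      have "f xh \<le> ereal (fr yt + hr yt - hr xh + zh \<bullet> (A *v (yt - xh)))" using lim_x[OF ytp cmb(1)] .
      then have l: "fr xh \<le> fr yt + hr yt - hr xh + zh \<bullet> (A *v (yt - xh))" by (subst (asm) fx) simp
      have ip: "zh \<bullet> (A *v (yt - xh)) = t * (zh \<bullet> (A *v (y - xh)))"
        unfolding yt_def by (simp add: matrix_vector_mult_scaleR)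
      have "t * (- C) \<le> hr yt - hr xh" using l fyt ip unfolding C_def by (simp add: algebra_simps)
      then have "- C * t \<le> hr yt - hr xh" by (simp add: mult.commute)
      then show ?thesis unfolding yt_def[symmetric] using pos_le_divide_eq[OF t(1)] by blast
    qed
    have der: "((\<lambda>w. hr w) has_derivative (\<lambda>d. gh xh \<bullet> d)) (at xh)" using h_diff xh_h by blast
    have "- C \<le> gh xh \<bullet> (y - xh)" by (rule lim_ge[OF t0(1) key deriv_line[OF der]])
    moreover have "(- (transpose A *v zh) - gh xh) \<bullet> (y - xh) = - (zh \<bullet> (A *v (y - xh))) - gh xh \<bullet> (y - xh)"
      by (simp add: inner_diff_left dot_lmul_matrix)
    ultimately show ?thesis unfolding C_def by linarith
  qed
  show ?thesis unfolding subdiff_def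
  proof (intro CollectI conjI allI)
    show "\<bar>f xh\<bar> \<noteq> \<infinity>" by (subst fx) simp
    fix y
    show "f xh + ereal ((- (transpose A *v zh) - gh xh) \<bullet> (y - xh)) \<le> f y"
    proof (cases "y \<in> edom f")
      case True
      have eq: "f y = ereal (fr y)" using f_fin[OF True] .
      show ?thesis using main[OF True] by (subst fx, subst eq) simp
    next
      case False then have "f y = \<infinity>" unfolding edom_def by (simp add: top.not_eq_extremum)
      then show ?thesis by simp
    qed
  qed
qed

lemma zh_sub: "A *v xh \<in> subdiff (conjugate g) zh"
proof -
  have cz: "conjugate g zh = ereal (cr zh)" using c_fin[OF zh_c] .
  obtain ep where ep: "ep > 0" "ball zh ep \<subseteq> interior (edom \<phi>d)"
    using open_contains_ball_eq[OF open_interior] zh_int by blast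
  have main: "cr zh + (A *v xh) \<bullet> (w - zh) \<le> cr w" if w: "w \<in> edom (conjugate g)" for w
  proof -
    define n where "n = norm (w - zh)"
    define t where "t = min 1 (ep / (n + 1))"
    have t: "t > 0" "t * n < ep" "t \<le> 1"
      using small_t[OF ep(1), of n] unfolding t_def n_def by auto
    define wt where "wt = zh + t *\<^sub>R (w - zh)"
    have wt: "wt = (1-t) *\<^sub>R zh + t *\<^sub>R w" unfolding wt_def by (simp add: algebra_simps)
    have "dist zh wt = t * n" unfolding wt_def n_def dist_norm using t by simp
    then have "wt \<in> ball zh ep" using t by simp
    then have wtd: "wt \<in> edom \<phi>d" using ep(2) interior_subset by blast
    have cw: "conjugate g wt \<le> ereal ((1-t) * cr zh + t * cr w)"
      unfolding wt using conj_comb[OF g_nm c_fin[OF zh_c] c_fin[OF w]] t by auto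
    then have wtc: "wt \<in> edom (conjugate g)" unfolding edom_def using le_less_trans by fastforce
    have cwr: "cr wt \<le> (1-t) * cr zh + t * cr w"
    proof -
      have eq: "conjugate g wt = ereal (cr wt)" using c_fin[OF wtc] .
      show ?thesis using cw by (subst (asm) eq) simp
    qed
    have "conjugate g zh \<le> ereal (cr wt - (wt - zh) \<bullet> (A *v xh))" using lim_z[OF wtd wtc] .
    then have l: "cr zh \<le> cr wt - (wt - zh) \<bullet> (A *v xh)" by (subst (asm) cz) simp
    have ip: "(wt - zh) \<bullet> (A *v xh) = t * ((w - zh) \<bullet> (A *v xh))" unfolding wt_def by simp
    have "t * cr zh \<le> t * (cr w - (w - zh) \<bullet> (A *v xh))" using l cwr ip by (simp add: algebra_simps)
    then have "cr zh \<le> cr w - (w - zh) \<bullet> (A *v xh)" using t(1) by simp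
    then show ?thesis by (simp add: inner_commute)
  qed
  show ?thesis unfolding subdiff_def
  proof (intro CollectI conjI allI)
    show "\<bar>conjugate g zh\<bar> \<noteq> \<infinity>" by (subst cz) simp
    fix w
    show "conjugate g zh + ereal ((A *v xh) \<bullet> (w - zh)) \<le> conjugate g w"
    proof (cases "w \<in> edom (conjugate g)")
      case True
      have eq: "conjugate g w = ereal (cr w)" using c_fin[OF True] .
      show ?thesis using main[OF True] by (subst cz, subst eq) simp
    next
      case False then have "conjugate g w = \<infinity>" unfolding edom_def by (simp add: top.not_eq_extremum)
      then show ?thesis by simp
    qed
  qed
qed

lemma sol_h: "issol xh zh"
  unfolding issol_def using xh_int zh_int interior_subset[of "edom \<phi>p"] interior_subset[of "edom \<phi>d"]
    xh_h xh_sub zh_sub by blast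

end

end

context bcv begin

lemma final: "\<exists>xh zh. x \<longlonglongrightarrow> xh \<and> z \<longlonglongrightarrow> zh \<and> xh \<in> edom h
            \<and> - (transpose A *v zh) - gh xh \<in> subdiff f xh \<and> A *v xh \<in> subdiff (conjugate g) zh"
proof -
  obtain r xh zh where cl: "clus r xh zh" using clus_ex by blast
  have s: "issol xh zh" using sol_h[OF cl] .
  have b1: "(\<lambda>j. bdist \<phi>p Gp xh (x (r j))) \<longlonglongrightarrow> bdist \<phi>p Gp xh xh" using bdist_cont[OF kp xh_int[OF cl] cl_x[OF cl]] .
  have b2: "(\<lambda>j. bdist \<phi>d Gd zh (z (r j))) \<longlonglongrightarrow> bdist \<phi>d Gd zh zh" using bdist_cont[OF kd zh_int[OF cl] cl_z[OF cl]] .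
  have bz: "bdist \<phi>p Gp xh xh = 0" "bdist \<phi>d Gd zh zh = 0" unfolding bdist_def by simp_all
  have "(\<lambda>j. bdist \<phi>p Gp xh (x (r j)) / \<tau> + bdist \<phi>d Gd zh (z (r j)) / \<sigma> - sg * ((z (r j) - zh) \<bullet> (A *v (x (r j) - xh))))
     \<longlonglongrightarrow> bdist \<phi>p Gp xh xh / \<tau> + bdist \<phi>d Gd zh zh / \<sigma> - sg * ((zh - zh) \<bullet> (A *v (xh - xh)))"
    using step(1,2)
    by (intro b1 b2 cl_x[OF cl] cl_z[OF cl] tendsto_intros bounded_linear.tendsto[OF matrix_vector_mul_bounded_linear]) auto
  then have Vr: "(\<lambda>j. V xh zh (r j)) \<longlonglongrightarrow> 0" unfolding V_def Phi_def bz by simp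
  obtain Lm where Lm: "V xh zh \<longlonglongrightarrow> Lm"
    using decseq_convergent[OF V_decseq[OF s], of 0] V_nonneg[OF s] by blast
  have "(\<lambda>j. V xh zh (r j)) \<longlonglongrightarrow> Lm" using LIMSEQ_subseq_LIMSEQ[OF Lm cl_r[OF cl]] by (simp add: o_def)
  then have "Lm = 0" using Vr LIMSEQ_unique by blast
  then have V0: "V xh zh \<longlonglongrightarrow> 0" using Lm by simp
  have e1: "(\<lambda>k. \<tau> * V xh zh k / (1 - thh)) \<longlonglongrightarrow> \<tau> * 0 / (1 - thh)"
    using cst(6) by (intro tendsto_intros V0) auto
  have e2: "(\<lambda>k. \<sigma> * V xh zh k / (1 - thh)) \<longlonglongrightarrow> \<sigma> * 0 / (1 - thh)"
    using cst(6) by (intro tendsto_intros V0) auto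
  note S = issolD[OF s]
  have "(\<lambda>k. xh - x k) \<longlonglongrightarrow> 0"
  proof (rule norm_from_N[OF Np_norm _ e1[simplified]])
    fix k
    have "(Np (xh - x k))\<^sup>2 / 2 \<le> bdist \<phi>p Gp xh (x k)" using dp_strong S(1) x_int by blast
    then show "(Np (xh - x k))\<^sup>2 / 2 \<le> \<tau> * V xh zh k / (1 - thh)" using D_bounds_gen(1)[OF s, of k] by linarith
  qed
  from tendsto_diff[OF tendsto_const this, of xh] have xl: "x \<longlonglongrightarrow> xh" by simp
  have "(\<lambda>k. zh - z k) \<longlonglongrightarrow> 0"
  proof (rule norm_from_N[OF Nd_norm _ e2[simplified]])
    fix k
    have "(Nd (zh - z k))\<^sup>2 / 2 \<le> bdist \<phi>d Gd zh (z k)" using dd_strong S(2) z_int by blast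
    then show "(Nd (zh - z k))\<^sup>2 / 2 \<le> \<sigma> * V xh zh k / (1 - thh)" using D_bounds_gen(2)[OF s, of k] by linarith
  qed
  from tendsto_diff[OF tendsto_const this, of zh] have zl: "z \<longlonglongrightarrow> zh" by simp
  show ?thesis using xl zl s unfolding issol_def by blast
qed

end

theorem mainTheorem5:
  fixes f :: "real^'n \<Rightarrow> ereal" and h :: "real^'n \<Rightarrow> ereal" and gh :: "real^'n \<Rightarrow> real^'n"
    and g :: "real^'m \<Rightarrow> ereal" and A :: "real^'n^'m"
    and \<phi>p :: "real^'n \<Rightarrow> ereal" and Gp :: "real^'n \<Rightarrow> real^'n"
    and \<phi>d :: "real^'m \<Rightarrow> ereal" and Gd :: "real^'m \<Rightarrow> real^'m"
    and Np :: "real^'n \<Rightarrow> real" and Nd :: "real^'m \<Rightarrow> real"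
    and L \<sigma> \<tau> :: real
    and x :: "nat \<Rightarrow> real^'n" and z :: "nat \<Rightarrow> real^'m"
  assumes f_cc: "eclosed f" "econvex f"
    and g_cc: "eclosed g" "econvex g" "eproper g"
    and h_cc: "eclosed h" "econvex h"
    and h_dom: "open (edom h)" "convex (edom h)"
    and h_diff: "\<forall>y\<in>edom h. \<bar>h y\<bar> \<noteq> \<infinity> \<and>
                  ((\<lambda>w. real_of_ereal (h w)) has_derivative (\<lambda>d. gh y \<bullet> d)) (at y)"
    and fh_proper: "eproper (\<lambda>y. f y + h y)"
    and kp: "bkernel \<phi>p Gp" and kd: "bkernel \<phi>d Gd"
    and proxp: "bprox_welldef \<phi>p Gp (\<lambda>y. ereal \<tau> * f y)"
    and proxd: "bprox_welldef \<phi>d Gd (\<lambda>w. ereal \<sigma> * conjugate g w)"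
    and Np_norm: "is_norm Np" and Nd_norm: "is_norm Nd"
    and dp_strong: "\<forall>y\<in>edom \<phi>p. \<forall>y'\<in>interior (edom \<phi>p). bdist \<phi>p Gp y y' \<ge> (Np (y - y'))\<^sup>2 / 2"
    and dd_strong: "\<forall>w\<in>edom \<phi>d. \<forall>w'\<in>interior (edom \<phi>d). bdist \<phi>d Gd w w' \<ge> (Nd (w - w'))\<^sup>2 / 2"
    and dom_sub: "edom \<phi>p \<subseteq> edom h"
    and L_pos: "L > 0"
    and h_smooth: "\<forall>y\<in>edom \<phi>p. \<forall>y'\<in>interior (edom \<phi>p).
         real_of_ereal (h y) - real_of_ereal (h y') - gh y' \<bullet> (y - y') \<le> L * bdist \<phi>p Gp y y'"
    and sol_exists: "\<exists>xs zs. xs \<in> edom \<phi>p \<and> zs \<in> edom \<phi>d \<and>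
         xs \<in> edom h \<and> - (transpose A *v zs) - gh xs \<in> subdiff f xs \<and> A *v xs \<in> subdiff (conjugate g) zs"
    and closed_dp: "\<forall>y\<in>edom \<phi>p. \<forall>c. closed {y'\<in>interior (edom \<phi>p). bdist \<phi>p Gp y y' \<le> c}"
    and closed_dd: "\<forall>w\<in>edom \<phi>d. \<forall>c. closed {w'\<in>interior (edom \<phi>d). bdist \<phi>d Gd w w' \<le> c}"
    and cont_dp: "\<forall>xs y. (\<forall>k. xs k \<in> interior (edom \<phi>p)) \<and> xs \<longlonglongrightarrow> y \<and> y \<in> edom \<phi>p
         \<longrightarrow> (\<lambda>k. bdist \<phi>p Gp y (xs k)) \<longlonglongrightarrow> 0"
    and cont_dd: "\<forall>zs w. (\<forall>k. zs k \<in> interior (edom \<phi>d)) \<and> zs \<longlonglongrightarrow> w \<and> w \<in> edom \<phi>d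
         \<longrightarrow> (\<lambda>k. bdist \<phi>d Gd w (zs k)) \<longlonglongrightarrow> 0"
    and step: "\<sigma> > 0" "\<tau> > 0" "\<sigma> * \<tau> * (opnorm Np Nd A)\<^sup>2 + \<tau> * L < 1"
    and x0: "x 0 \<in> interior (edom \<phi>p) \<inter> edom h"
    and z0: "z 0 \<in> interior (edom \<phi>d)"
    and iter: "(\<forall>k. x (Suc k) = bprox \<phi>p Gp (\<lambda>y. ereal \<tau> * f y) (x k)
                          (\<tau> *\<^sub>R (transpose A *v z k) + \<tau> *\<^sub>R gh (x k))
                 \<and> z (Suc k) = bprox \<phi>d Gd (\<lambda>w. ereal \<sigma> * conjugate g w) (z k)
                          (- \<sigma> *\<^sub>R (A *v (2 *\<^sub>R x (Suc k) - x k))))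
            \<or> (\<forall>k. z (Suc k) = bprox \<phi>d Gd (\<lambda>w. ereal \<sigma> * conjugate g w) (z k)
                          (- \<sigma> *\<^sub>R (A *v x k))
                 \<and> x (Suc k) = bprox \<phi>p Gp (\<lambda>y. ereal \<tau> * f y) (x k)
                          (\<tau> *\<^sub>R (transpose A *v (2 *\<^sub>R z (Suc k) - z k)) + \<tau> *\<^sub>R gh (x k)))"
  shows "\<exists>xh zh. x \<longlonglongrightarrow> xh \<and> z \<longlonglongrightarrow> zh \<and> xh \<in> edom h
            \<and> - (transpose A *v zh) - gh xh \<in> subdiff f xh \<and> A *v xh \<in> subdiff (conjugate g) zh"
proof -
  note A = assms
  show ?thesis using iter
  proof
    assume it: "\<forall>k. x (Suc k) = bprox \<phi>p Gp (\<lambda>y. ereal \<tau> * f y) (x k)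
                          (\<tau> *\<^sub>R (transpose A *v z k) + \<tau> *\<^sub>R gh (x k))
                 \<and> z (Suc k) = bprox \<phi>d Gd (\<lambda>w. ereal \<sigma> * conjugate g w) (z k)
                          (- \<sigma> *\<^sub>R (A *v (2 *\<^sub>R x (Suc k) - x k)))"
    interpret bcv f h gh g A \<phi>p Gp \<phi>d Gd Np Nd L \<sigma> \<tau> x z z "\<lambda>k. 2 *\<^sub>R x (Suc k) - x k"
      by (unfold_locales; (use A it in auto)?)
    show ?thesis by (rule final)
  next
    assume it: "\<forall>k. z (Suc k) = bprox \<phi>d Gd (\<lambda>w. ereal \<sigma> * conjugate g w) (z k)
                          (- \<sigma> *\<^sub>R (A *v x k))
                 \<and> x (Suc k) = bprox \<phi>p Gp (\<lambda>y. ereal \<tau> * f y) (x k)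
                          (\<tau> *\<^sub>R (transpose A *v (2 *\<^sub>R z (Suc k) - z k)) + \<tau> *\<^sub>R gh (x k))"
    interpret bcv f h gh g A \<phi>p Gp \<phi>d Gd Np Nd L \<sigma> \<tau> x z "\<lambda>k. 2 *\<^sub>R z (Suc k) - z k" x
      by (unfold_locales; (use A it in auto)?)
    show ?thesis by (rule final)
  qed
qed


end
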